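(* In the stochastic approximation setting described in the context (with $\mu>0$ chosen so that $\alpha_2>0$), suppose $\epsilon_k\equiv\epsilon\le\alpha_2/\alpha_3$ for all $k$. Then for all $k\ge0$, $$\mathbb{E}[\|x_k-x^*\|_c^2]\le\alpha_1\|x_0-x^*\|_c^2(1-\alpha_2\epsilon)^k+(A+2B\|x^*\|_c^2)\frac{\alpha_4\epsilon}{\alpha_2}.$$
   Context: Let $\|\cdot\|_c,\|\cdot\|_e$ be arbitrary norms on $\mathbb{R}^d$. Let $\mathcal H:\mathbb{R}^d\to\mathbb{R}^d$ satisfy $\|\mathcal H(x)-\mathcal H(y)\|_c\le\gamma\|x-y\|_c$ for all $x,y$, for some $\gamma\in(0,1)$, and let $x^*$ be its unique fixed point. Fix a deterministic $x_0\in\mathbb{R}^d$ and define $x_{k+1}=x_k+\epsilon_k(\mathcal H(x_k)-x_k+w_k)$, where $\{w_k\}$ are random vectors such that, letting $\mathcal F_k$ be the $\sigma$-algebra generated by $x_0,w_0,\dots,x_{k-1},w_{k-1},x_k$, for all $k\ge0$: $\mathbb{E}[w_k\mid\mathcal F_k]=0$ and $\mathbb{E}[\|w_k\|_e^2\mid\mathcal F_k]\le A+B\|x_k\|_e^2$ for constants $A,B>0$. A convex differentiable $h$ is $L$-smooth w.r.t. a norm $\|\cdot\|$ if $h(y)\le h(x)+\langle\nabla h(x),y-x\rangle+\frac L2\|x-y\|^2$ for all $x,y$. Let $\|\cdot\|_s$ be a norm such that $g(x)=\frac12\|x\|_s^2$ is $L$-smooth w.r.t. $\|\cdot\|_s$,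 and let $\ell_{cs},\ell_{es}\in(0,1]$, $u_{cs},u_{es}\in[1,\infty)$ satisfy $\ell_{cs}\|x\|_c\le\|x\|_s\le u_{cs}\|x\|_c$ and $\ell_{es}\|x\|_e\le\|x\|_s\le u_{es}\|x\|_e$ for all $x$. For $\mu>0$ define $\alpha_1=\frac{1+\mu/\ell_{cs}^2}{1+\mu/u_{cs}^2}$, $\alpha_2=1-\gamma\alpha_1^{1/2}$, $\alpha_3=\frac{4u_{cs}^2u_{es}^2(B+2)L(\ell_{cs}^2+\mu)}{\mu\ell_{cs}^2\ell_{es}^2}$, $\alpha_4=\frac{\alpha_3}{2(B+2)}$; $\mu$ is chosen so that $\alpha_2>0$. *)

theory Defs
  imports "HOL-Analysis.Analysis" "HOL-Probability.Probability"
begin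

definition is_norm :: "(real ^ 'n \<Rightarrow> real) \<Rightarrow> bool" where
  "is_norm N \<longleftrightarrow> (\<forall>x. N x = 0 \<longleftrightarrow> x = 0) \<and> (\<forall>c x. N (c *\<^sub>R x) = \<bar>c\<bar> * N x)
     \<and> (\<forall>x y. N (x + y) \<le> N x + N y)"

text \<open>h is convex, differentiable and L-smooth w.r.t. the norm N; the inner product of the
  gradient with y - x is the Frechet derivative D applied to y - x.\<close>
definition L_smooth :: "(real ^ 'n \<Rightarrow> real) \<Rightarrow> (real ^ 'n \<Rightarrow> real) \<Rightarrow> real \<Rightarrow> bool" where
  "L_smooth h N L \<longleftrightarrow> convex_on UNIV h \<and>
     (\<forall>x. \<exists>D. (h has_derivative D) (at x) \<and>
        (\<forall>y. h y \<le> h x + D (y - x) + L / 2 * (N (x - y))\<^sup>2))"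

primrec SA_iter :: "(real ^ 'n \<Rightarrow> real ^ 'n) \<Rightarrow> (nat \<Rightarrow> real) \<Rightarrow> real ^ 'n
    \<Rightarrow> (nat \<Rightarrow> 'a \<Rightarrow> real ^ 'n) \<Rightarrow> nat \<Rightarrow> 'a \<Rightarrow> real ^ 'n" where
  "SA_iter H eps x0 w 0 = (\<lambda>\<omega>. x0)"
| "SA_iter H eps x0 w (Suc k) = (\<lambda>\<omega>. SA_iter H eps x0 w k \<omega> +
      eps k *\<^sub>R (H (SA_iter H eps x0 w k \<omega>) - SA_iter H eps x0 w k \<omega> + w k \<omega>))"

definition SA_filt :: "'a measure \<Rightarrow> (nat \<Rightarrow> 'a \<Rightarrow> real ^ 'n) \<Rightarrow> (nat \<Rightarrow> 'a \<Rightarrow> real ^ 'n)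
    \<Rightarrow> nat \<Rightarrow> 'a measure" where
  "SA_filt M X w k = sigma (space M)
     ((\<Union>j\<in>{..k}. {X j -` B \<inter> space M | B. B \<in> sets borel})
      \<union> (\<Union>j\<in>{..<k}. {w j -` B \<inter> space M | B. B \<in> sets borel}))"

end

theory Submission
  imports Defs
begin

lemma isn_zero: "is_norm N \<Longrightarrow> N 0 = 0" unfolding is_norm_def by auto
lemma isn_scale: "is_norm N \<Longrightarrow> N (c *\<^sub>R x) = \<bar>c\<bar> * N x" unfolding is_norm_def by auto
lemma isn_tri: "is_norm N \<Longrightarrow> N (x + y) \<le> N x + N y" unfolding is_norm_def by auto
lemma isn_eq0: "is_norm N \<Longrightarrow> N x = 0 \<longleftrightarrow> x = 0" unfolding is_norm_def by auto
lemma isn_neg: assumes "is_norm N" shows "N (- x) = N x"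
proof -
  have "N ((-1) *\<^sub>R x) = N x" using isn_scale[OF assms, of "-1" x] by simp
  thus ?thesis by simp
qed
lemma isn_nonneg: assumes "is_norm N" shows "0 \<le> N x"
proof -
  have "N (x + - x) \<le> N x + N (- x)" by (rule isn_tri[OF assms])
  thus ?thesis using isn_zero[OF assms] isn_neg[OF assms] by simp
qed
lemma isn_commute: assumes "is_norm N" shows "N (x - y) = N (y - x)"
  using isn_neg[OF assms, of "x - y"] by simp
lemma isn_diff: assumes "is_norm N" shows "N x - N y \<le> N (x - y)"
  using isn_tri[OF assms, of "x - y" y] by simp
lemma isn_abs_diff: assumes "is_norm N" shows "\<bar>N x - N y\<bar> \<le> N (x - y)"
  using isn_diff[OF assms, of x y] isn_diff[OF assms, of y x] isn_commute[OF assms, of x y] by linarith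
lemma isn_sum: assumes "is_norm N" "finite S" shows "N (sum f S) \<le> (\<Sum>i\<in>S. N (f i))"
  using assms(2)
proof (induction S rule: finite_induct)
  case empty then show ?case using isn_zero[OF assms(1)] by simp
next
  case (insert a S)
  then show ?case using isn_tri[OF assms(1), of "f a" "sum f S"] by simp
qed

lemma isn_upper: assumes "is_norm N" shows "N x \<le> (\<Sum>i\<in>UNIV. N (axis i 1)) * norm x"
proof -
  have "x = (\<Sum>i\<in>UNIV. (x $ i) *\<^sub>R axis i (1::real))"
    using basis_expansion[of x] by (simp add: scalar_mult_eq_scaleR)
  hence "N x = N (\<Sum>i\<in>UNIV. (x $ i) *\<^sub>R axis i (1::real))" by simp
  also have "\<dots> \<le> (\<Sum>i\<in>UNIV. N ((x $ i) *\<^sub>R axis i (1::real)))" by (rule isn_sum[OF assms]) simp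
  also have "\<dots> = (\<Sum>i\<in>UNIV. \<bar>x $ i\<bar> * N (axis i 1))" by (simp add: isn_scale[OF assms])
  also have "\<dots> \<le> (\<Sum>i\<in>UNIV. norm x * N (axis i 1))"
    by (rule sum_mono, rule mult_right_mono) (auto simp: component_le_norm_cart isn_nonneg[OF assms])
  also have "\<dots> = (\<Sum>i\<in>UNIV. N (axis i 1)) * norm x" by (simp add: sum_distrib_left mult.commute)
  finally show ?thesis .
qed

lemma isn_convex: fixes N :: "real^'n \<Rightarrow> real" assumes "is_norm N" shows "convex_on UNIV N"
  unfolding convex_on_def
proof (intro conjI ballI allI impI)
  fix x y :: "real^'n" and u v :: real assume "0 \<le> u" "0 \<le> v" "u + v = 1"
  have "N (u *\<^sub>R x + v *\<^sub>R y) \<le> N (u *\<^sub>R x) + N (v *\<^sub>R y)" by (rule isn_tri[OF assms])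
  thus "N (u *\<^sub>R x + v *\<^sub>R y) \<le> u * N x + v * N y" using \<open>0 \<le> u\<close> \<open>0 \<le> v\<close>
    by (simp add: isn_scale[OF assms])
qed simp

lemma isn_cont: assumes "is_norm N" shows "continuous_on UNIV N"
  by (rule convex_on_continuous[OF open_UNIV isn_convex[OF assms]])

lemma isn_meas: assumes "is_norm N" shows "N \<in> borel_measurable borel"
  by (rule borel_measurable_continuous_onI[OF isn_cont[OF assms]])

lemma isn_lower: fixes N :: "real^'n \<Rightarrow> real" assumes "is_norm N" obtains c where "c > 0" "\<And>x. c * norm x \<le> N x"
proof -
  obtain i :: 'n where True by simp
  have "axis i (1::real) \<in> sphere (0::real^'n) 1" by (simp add: sphere_def norm_axis_1)
  hence ne: "sphere (0::real^'n) 1 \<noteq> {}" by blast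
  obtain u where u: "u \<in> sphere (0::real^'n) 1" "\<And>v. v \<in> sphere 0 1 \<Longrightarrow> N u \<le> N v"
    using continuous_attains_inf[OF compact_sphere ne continuous_on_subset[OF isn_cont[OF assms]]] by blast
  have "u \<noteq> 0" using u(1) by auto
  hence cpos: "N u > 0" using isn_eq0[OF assms, of u] isn_nonneg[OF assms, of u] by linarith
  have "N u * norm x \<le> N x" for x
  proof (cases "x = 0")
    case True then show ?thesis by (simp add: isn_zero[OF assms])
  next
    case False
    hence "(1 / norm x) *\<^sub>R x \<in> sphere 0 1" by (simp add: sphere_def)
    hence "N u \<le> N ((1 / norm x) *\<^sub>R x)" by (rule u(2))
    also have "\<dots> = N x / norm x" by (simp add: isn_scale[OF assms])
    finally show ?thesis using False by (simp add: field_simps)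
  qed
  thus ?thesis using that cpos by (metis mult.commute)
qed

lemma isn_sq_convex: assumes "is_norm N" "0 \<le> u" "0 \<le> v" "u + v = 1"
  shows "(N (u *\<^sub>R x + v *\<^sub>R y))\<^sup>2 \<le> u * (N x)\<^sup>2 + v * (N y)\<^sup>2"
proof -
  have "N (u *\<^sub>R x + v *\<^sub>R y) \<le> u * N x + v * N y"
    using isn_convex[OF assms(1)] assms(2-4) unfolding convex_on_def by auto
  hence "(N (u *\<^sub>R x + v *\<^sub>R y))\<^sup>2 \<le> (u * N x + v * N y)\<^sup>2"
    by (rule power_mono) (rule isn_nonneg[OF assms(1)])
  also have "(u * N x + v * N y)\<^sup>2 = u * (N x)\<^sup>2 + v * (N y)\<^sup>2 - u * v * (N x - N y)\<^sup>2"
  proof -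
    have v: "v = 1 - u" using assms(4) by simp
    show ?thesis unfolding v by (simp add: power2_eq_square algebra_simps)
  qed
  also have "\<dots> \<le> u * (N x)\<^sup>2 + v * (N y)\<^sup>2" using assms(2,3) by simp
  finally show ?thesis .
qed

lemma eps_lemma: fixes a b c :: real
  assumes "\<And>t. 0 < t \<Longrightarrow> t < 1 \<Longrightarrow> a \<le> b + t * c" shows "a \<le> b"
proof (rule ccontr)
  assume "\<not> a \<le> b"
  show False
  proof (cases "c \<le> 0")
    case True
    then show False using assms[of "1/2"] \<open>\<not> a \<le> b\<close> by simp
  next
    case False
    define t where "t = min (1/2) ((a - b) / (2 * c))"
    have "0 < t" "t < 1" using False \<open>\<not> a \<le> b\<close> by (auto simp: t_def)
    have "t * c \<le> (a - b) / (2 * c) * c" using False by (intro mult_right_mono) (auto simp: t_def)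
    also have "\<dots> = (a - b) / 2" using False by simp
    finally show False using assms[OF \<open>0 < t\<close> \<open>t < 1\<close>] \<open>\<not> a \<le> b\<close> by simp
  qed
qed

lemma alg_T: assumes "0<(l::real)" "0<mu" "l*mu*(a+b)^2 \<le> (l+mu)*(mu*a^2+l*b^2)" shows "l/(l+mu)*(a+b)^2 \<le> a^2 + l*b^2/mu"
proof -
  have p: "l*mu + mu*mu > 0" "mu*l+mu*mu > 0" "l+mu>0" using assms by (simp_all add: add_pos_pos)
  hence nz: "l + mu \<noteq> 0" "mu + l \<noteq> 0" "l*mu+mu*mu \<noteq> 0" "mu*l+mu*mu \<noteq> 0" "mu \<noteq> 0" using assms by auto
  have e1: "l/(l+mu)*(a+b)^2 = (l*mu*(a+b)^2)/(mu*(l+mu))" using nz by (simp add: field_simps)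
  have "(l*mu*(a+b)^2)/(mu*(l+mu)) \<le> (l+mu)*(mu*a^2+l*b^2)/(mu*(l+mu))" using assms by (intro divide_right_mono) auto
  also have "(l+mu)*(mu*a^2+l*b^2)/(mu*(l+mu)) = a^2 + l*b^2/mu" using nz by (simp add: field_simps)
  finally show ?thesis using e1 by simp
qed

lemma alg_T2: assumes "0<(k::real)" "0<mu" shows "(k / (k + mu))\<^sup>2 * n\<^sup>2 / 2 + (mu / (k + mu))\<^sup>2 * k * n\<^sup>2 / (2 * mu)
          = k / (k + mu) * n\<^sup>2 / 2"
proof -
  define s where "s = k + mu"
  have s: "s > 0" using assms by (simp add: s_def)
  have "(k / s)\<^sup>2 * n\<^sup>2 / 2 + (mu / s)\<^sup>2 * k * n\<^sup>2 / (2 * mu) = (k * k + mu * k) / s\<^sup>2 * n\<^sup>2 / 2"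
    using s assms by (simp add: field_simps power2_eq_square)
  also have "k * k + mu * k = k * s" by (simp add: s_def algebra_simps)
  also have "k * s / s\<^sup>2 * n\<^sup>2 / 2 = k / s * n\<^sup>2 / 2" using s by (simp add: power2_eq_square)
  finally show ?thesis by (simp add: s_def)
qed
lemma alg_T3: assumes "a > 0" "b > (0::real)" shows "(a / b)\<^sup>2 * (b\<^sup>2 / 2) + a\<^sup>2/2 = a\<^sup>2"
  using assms by (simp add: field_simps power2_eq_square)

lemma alg_step:
  fixes a a' Q Wv Xe K e a2 u v r A B n cL :: real
  assumes h1: "a' \<le> (1 - 2*a2*e)*a + K*e\<^sup>2*(8*u\<^sup>2*Q + 2* v\<^sup>2*Wv)"
    and h2: "Wv \<le> A + B*Xe" and h3: "Xe \<le> 2*r*(Q + n\<^sup>2)" and h4: "cL*Q \<le> 2*a"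
    and pos: "a \<ge> 0" "Q \<ge> 0" "K \<ge> 0" "e > 0" "B > 0" "A > 0" "r \<ge> 1" "u\<^sup>2 \<le> r" "v \<ge> 1" "cL > 0"
    and small: "K*4* v\<^sup>2*r*(B+2)*2/cL * e \<le> a2"
  shows "a' \<le> (1 - a2*e)*a + e\<^sup>2*(K*2* v\<^sup>2*r*(A + 2*B*n\<^sup>2))"
proof -
  have v2: "v\<^sup>2 \<ge> 1" using pos by (simp add: one_le_power)
  have s1: "8*u\<^sup>2*Q + 2* v\<^sup>2*Wv \<le> 8*u\<^sup>2*Q + 2* v\<^sup>2*(A + 2*B*r*(Q + n\<^sup>2))"
  proof -
    have "B*Xe \<le> B*(2*r*(Q + n\<^sup>2))" using h3 pos by (intro mult_left_mono) auto
    hence "Wv \<le> A + 2*B*r*(Q + n\<^sup>2)" using h2 by (simp add: algebra_simps)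
    thus ?thesis using v2 by (intro add_left_mono mult_left_mono) auto
  qed
  have s2: "8*u\<^sup>2*Q + 2* v\<^sup>2*(A + 2*B*r*(Q + n\<^sup>2)) \<le> 4* v\<^sup>2*r*(B+2)*Q + 2* v\<^sup>2*r*(A + 2*B*n\<^sup>2)"
  proof -
    have "u\<^sup>2 \<le> v\<^sup>2 * r" using pos v2 mult_mono[of 1 "v\<^sup>2" "u\<^sup>2" r] by simp
    hence f1: "8*u\<^sup>2*Q \<le> 8*(v\<^sup>2*r)*Q" using pos by (intro mult_right_mono) auto
    have f2: "2* v\<^sup>2*A \<le> 2* v\<^sup>2*A*r" using pos v2 by simp
    show ?thesis using f1 f2 by (simp add: algebra_simps)
  qed
  have s3: "4* v\<^sup>2*r*(B+2)*Q \<le> 4* v\<^sup>2*r*(B+2)*(2*a/cL)"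
  proof -
    have "Q \<le> 2*a/cL" using h4 pos by (simp add: field_simps)
    thus ?thesis using pos v2 by (intro mult_left_mono) auto
  qed
  have "K*e\<^sup>2*(8*u\<^sup>2*Q + 2* v\<^sup>2*Wv) \<le> K*e\<^sup>2*(4* v\<^sup>2*r*(B+2)*(2*a/cL) + 2* v\<^sup>2*r*(A + 2*B*n\<^sup>2))"
  proof -
    have "8*u\<^sup>2*Q + 2* v\<^sup>2*Wv \<le> 4* v\<^sup>2*r*(B+2)*(2*a/cL) + 2* v\<^sup>2*r*(A + 2*B*n\<^sup>2)"
      using s1 s2 s3 by linarith
    thus ?thesis using pos by (intro mult_left_mono) auto
  qed
  also have "\<dots> = (K*4* v\<^sup>2*r*(B+2)*2/cL * e) * e * a + e\<^sup>2*(K*2* v\<^sup>2*r*(A + 2*B*n\<^sup>2))"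
    by (simp add: power2_eq_square algebra_simps add_divide_distrib)
  also have "(K*4* v\<^sup>2*r*(B+2)*2/cL * e) * e * a \<le> a2 * e * a"
    using small pos by (intro mult_right_mono) auto
  finally show ?thesis using h1 by (simp add: algebra_simps)
qed

lemma rec_sol: fixes a :: "nat \<Rightarrow> real"
  assumes step: "\<And>k. a (Suc k) \<le> q * a k + b" and q: "0 \<le> q" "q < 1" and b: "0 \<le> b"
  shows "a k \<le> q ^ k * a 0 + b / (1 - q)"
proof (induction k)
  case 0 show ?case using q b by simp
next
  case (Suc k)
  have "a (Suc k) \<le> q * a k + b" by (rule step)
  also have "\<dots> \<le> q * (q ^ k * a 0 + b / (1 - q)) + b" using Suc q by (intro add_right_mono mult_left_mono) auto
  also have "\<dots> = q ^ Suc k * a 0 + b / (1 - q)" using q by (simp add: field_simps)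
  finally show ?case .
qed

lemma sq_tri: assumes "is_norm N" shows "(N (x + y))\<^sup>2 \<le> 2 * (N x)\<^sup>2 + 2 * (N y)\<^sup>2"
proof -
  have "N (x + y) \<le> N x + N y" by (rule isn_tri[OF assms])
  hence "(N (x + y))\<^sup>2 \<le> (N x + N y)\<^sup>2" using isn_nonneg[OF assms] by (intro power_mono) auto
  also have "\<dots> \<le> 2 * (N x)\<^sup>2 + 2 * (N y)\<^sup>2" using sum_squares_bound[of "N x" "N y"]
    by (simp add: power2_eq_square algebra_simps)
  finally show ?thesis .
qed

lemma sq_tri_real: "((a::real) + b)\<^sup>2 \<le> 2 * a\<^sup>2 + 2 * b\<^sup>2"
  using sum_squares_bound[of a b] by (simp add: power2_eq_square algebra_simps)

lemma int_bnd: fixes f g :: "'a \<Rightarrow> real"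
  assumes "integrable M f" "g \<in> borel_measurable M" "\<And>x. x \<in> space M \<Longrightarrow> \<bar>g x\<bar> \<le> f x"
  shows "integrable M g"
proof (rule Bochner_Integration.integrable_bound[OF assms(1,2)])
  show "AE x in M. norm (g x) \<le> norm (f x)"
    by (rule AE_I2) (use assms(3) in \<open>auto intro: order_trans[OF _ abs_ge_self]\<close>)
qed

lemma ge1_mult: "1 \<le> (x::real) \<Longrightarrow> 1 \<le> y \<Longrightarrow> 1 \<le> x * y" using mult_mono[of 1 x 1 y] by simp

lemma alg_fin: fixes c a t k u r b e :: real assumes "c \<noteq> 0" "a \<noteq> 0" "b + 2 \<noteq> 0"
  shows "2 / c * (e * (k * 2 * u * r * t) / a) = t * (k * 4 * u * r * (b + 2) * 2 / c / (2 * (b + 2))) * e / a"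
proof -
  have "k * 4 * u * r * (b + 2) * 2 / c / (2 * (b + 2)) = (k * 4 * u * r / c) * ((b + 2) * 2 / (2 * (b + 2)))"
    by (simp add: divide_divide_eq_left)
  also have "(b + 2) * 2 / (2 * (b + 2)) = 1" using assms(3) by simp
  finally have e: "k * 4 * u * r * (b + 2) * 2 / c / (2 * (b + 2)) = k * 4 * u * r / c" by simp
  show ?thesis unfolding e by (simp add: field_simps)
qed


locale moreau =
  fixes nc ns :: "real^'n \<Rightarrow> real" and L mu lcs ucs :: real
  assumes nc: "is_norm nc" and ns: "is_norm ns" and sm: "L_smooth (\<lambda>u. (ns u)\<^sup>2 / 2) ns L"
    and mu: "mu > 0" and lcs: "0 < lcs" and ucs: "1 \<le> ucs"
    and eqc1: "\<And>u. lcs * nc u \<le> ns u" and eqc2: "\<And>u. ns u \<le> ucs * nc u"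
begin

definition fm :: "real^'n \<Rightarrow> real^'n \<Rightarrow> real" where
  "fm y u = (nc u)\<^sup>2 / 2 + (ns (y - u))\<^sup>2 / (2 * mu)"
definition V :: "real^'n \<Rightarrow> real" where "V y = Inf (range (fm y))"

lemma fm_nonneg: "0 \<le> fm y u" using mu by (simp add: fm_def)
lemma bdd: "bdd_below (range (fm y))" by (rule bdd_belowI[where m=0]) (auto simp: fm_nonneg)
lemma V_le: "V y \<le> fm y u" unfolding V_def by (rule cInf_lower) (auto simp: bdd)
lemma V_nonneg: "0 \<le> V y" unfolding V_def by (rule cInf_greatest) (auto simp: fm_nonneg)

lemma cont_fm: "continuous_on UNIV (fm y)"
proof -
  have c1: "continuous_on UNIV (\<lambda>u. nc u)" by (rule isn_cont[OF nc])
  have c2: "continuous_on UNIV (\<lambda>u. ns (y - u))"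
    by (rule continuous_on_compose2[OF isn_cont[OF ns]]) (auto intro: continuous_intros)
  show ?thesis unfolding fm_def[abs_def] by (intro continuous_intros c1 c2) (use mu in auto)
qed

lemma minimizer: "\<exists>u. fm y u = V y"
proof -
  obtain c where c: "c > 0" "\<And>x. c * norm x \<le> nc x" using isn_lower[OF nc] by blast
  define R where "R = sqrt (2 * fm y 0) / c + 1"
  have "sqrt (2 * fm y 0) / c \<ge> 0" using c fm_nonneg[of y 0] by simp
  hence R: "R > 0" by (simp add: R_def)
  have cont: "continuous_on (cball 0 R) (fm y)" using cont_fm continuous_on_subset by blast
  obtain u where u: "u \<in> cball 0 R" "\<And>v. v \<in> cball 0 R \<Longrightarrow> fm y u \<le> fm y v"
    using continuous_attains_inf[OF compact_cball _ cont] R by (metis empty_iff centre_in_cball less_imp_le)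
  have all: "fm y u \<le> fm y v" for v
  proof (cases "v \<in> cball 0 R")
    case True then show ?thesis by (rule u(2))
  next
    case False
    hence "norm v > R" by (simp add: dist_norm)
    hence "c * norm v > c * R" using c by simp
    also have "c * R = sqrt (2 * fm y 0) + c" using c by (simp add: R_def field_simps)
    finally have "nc v > sqrt (2 * fm y 0)" using c(1) c(2)[of v] by linarith
    hence "(nc v)\<^sup>2 > (sqrt (2 * fm y 0))\<^sup>2"
      by (intro power_strict_mono) (auto simp: fm_nonneg)
    hence "(nc v)\<^sup>2 > 2 * fm y 0" using fm_nonneg[of y 0] by simp
    moreover have "(ns (y - v))\<^sup>2 / (2 * mu) \<ge> 0" using mu by simp
    ultimately have "fm y v > fm y 0" unfolding fm_def[of y v] by linarith
    moreover have "fm y u \<le> fm y 0" using u(2) R by simp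
    ultimately show ?thesis by simp
  qed
  have "V y = fm y u"
    by (rule antisym[OF V_le]) (unfold V_def, rule cInf_greatest, auto simp: all)
  thus ?thesis by metis
qed

definition um where "um y = (SOME u. fm y u = V y)"
lemma um: "fm y (um y) = V y" unfolding um_def by (rule someI_ex[OF minimizer])

definition Dg where "Dg a = (SOME D. ((\<lambda>u. (ns u)\<^sup>2 / 2) has_derivative D) (at a) \<and>
   (\<forall>z. (ns z)\<^sup>2 / 2 \<le> (ns a)\<^sup>2 / 2 + D (z - a) + L / 2 * (ns (a - z))\<^sup>2))"
lemma Dg_ex: "((\<lambda>u. (ns u)\<^sup>2 / 2) has_derivative Dg a) (at a) \<and>
   (\<forall>z. (ns z)\<^sup>2 / 2 \<le> (ns a)\<^sup>2 / 2 + Dg a (z - a) + L / 2 * (ns (a - z))\<^sup>2)"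
proof -
  have "\<exists>D. ((\<lambda>u. (ns u)\<^sup>2 / 2) has_derivative D) (at a) \<and>
   (\<forall>z. (ns z)\<^sup>2 / 2 \<le> (ns a)\<^sup>2 / 2 + D (z - a) + L / 2 * (ns (a - z))\<^sup>2)"
    using sm unfolding L_smooth_def by blast
  thus ?thesis unfolding Dg_def by (rule someI_ex)
qed
lemma Dg_lin: "linear (Dg a)"
  using Dg_ex[of a] has_derivative_bounded_linear bounded_linear.linear by blast
lemma Dg_ineq: "(ns z)\<^sup>2 / 2 \<le> (ns a)\<^sup>2 / 2 + Dg a (z - a) + L / 2 * (ns (a - z))\<^sup>2"
  using Dg_ex by blast

lemma L_ge1: "L \<ge> 1"
proof -
  obtain i :: 'n where True by simp
  define z :: "real^'n" where "z = axis i 1"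
  have "z \<noteq> 0" by (simp add: z_def axis_eq_0_iff)
  hence zp: "ns z > 0" using isn_eq0[OF ns, of z] isn_nonneg[OF ns, of z] by linarith
  have 1: "(ns z)\<^sup>2 / 2 \<le> Dg 0 z + L / 2 * (ns z)\<^sup>2"
    using Dg_ineq[of z 0] by (simp add: isn_zero[OF ns] isn_neg[OF ns])
  have 2: "(ns (-z))\<^sup>2 / 2 \<le> Dg 0 (-z) + L / 2 * (ns z)\<^sup>2"
    using Dg_ineq[of "-z" 0] by (simp add: isn_zero[OF ns] isn_neg[OF ns])
  have "Dg 0 (-z) = - Dg 0 z" using Dg_lin by (simp add: linear_neg)
  hence "(ns z)\<^sup>2 \<le> L * (ns z)\<^sup>2" using 1 2 by (simp add: isn_neg[OF ns])
  thus ?thesis using zp by simp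
qed

definition G :: "real^'n \<Rightarrow> real^'n \<Rightarrow> real" where "G y h = Dg (y - um y) h / mu"

lemma G_lin: "linear (G y)"
proof -
  have l: "linear (Dg (y - um y))" by (rule Dg_lin)
  show ?thesis unfolding G_def
    by (rule linearI) (simp_all add: linear_add[OF l] linear_scale[OF l] add_divide_distrib)
qed

lemma V_upper: "V (y + h) \<le> V y + G y h + L / (2 * mu) * (ns h)\<^sup>2"
proof -
  define u where "u = um y"
  define a where "a = y - u"
  have "V (y + h) \<le> fm (y + h) u" by (rule V_le)
  also have "\<dots> = (nc u)\<^sup>2 / 2 + (ns (a + h))\<^sup>2 / (2 * mu)" by (simp add: fm_def a_def algebra_simps)
  also have "(ns (a + h))\<^sup>2 / 2 \<le> (ns a)\<^sup>2 / 2 + Dg a h + L / 2 * (ns h)\<^sup>2"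
    using Dg_ineq[of "a + h" a] by (simp add: isn_neg[OF ns])
  hence "(ns (a + h))\<^sup>2 / (2 * mu) \<le> (ns a)\<^sup>2 / (2 * mu) + Dg a h / mu + L / (2 * mu) * (ns h)\<^sup>2"
    using mu by (simp add: field_simps)
  hence "(nc u)\<^sup>2 / 2 + (ns (a + h))\<^sup>2 / (2 * mu) \<le> fm y u + G y h + L / (2 * mu) * (ns h)\<^sup>2"
    by (simp add: fm_def G_def a_def u_def)
  also have "fm y u = V y" unfolding u_def by (rule um)
  finally show ?thesis .
qed

lemma V_conv: assumes "0 \<le> s" "0 \<le> t" "s + t = 1"
  shows "V (s *\<^sub>R a + t *\<^sub>R b) \<le> s * V a + t * V b"
proof -
  define p where "p = um a" define q where "q = um b"
  have "V (s *\<^sub>R a + t *\<^sub>R b) \<le> fm (s *\<^sub>R a + t *\<^sub>R b) (s *\<^sub>R p + t *\<^sub>R q)" by (rule V_le)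
  also have "\<dots> = (nc (s *\<^sub>R p + t *\<^sub>R q))\<^sup>2 / 2 + (ns (s *\<^sub>R (a - p) + t *\<^sub>R (b - q)))\<^sup>2 / (2 * mu)"
    by (simp add: fm_def algebra_simps)
  also have "\<dots> \<le> (s * (nc p)\<^sup>2 + t * (nc q)\<^sup>2) / 2 + (s * (ns (a - p))\<^sup>2 + t * (ns (b - q))\<^sup>2) / (2 * mu)"
    using isn_sq_convex[OF nc assms, of p q] isn_sq_convex[OF ns assms, of "a - p" "b - q"] mu
    by (intro add_mono divide_right_mono) auto
  also have "\<dots> = s * fm a p + t * fm b q" using mu by (simp add: fm_def field_simps)
  also have "\<dots> = s * V a + t * V b" by (simp add: p_def q_def um)
  finally show ?thesis .
qed

lemma V_convex: "convex_on UNIV V"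
  unfolding convex_on_def using V_conv by auto

lemma V_cont: "continuous_on UNIV V"
  by (rule convex_on_continuous[OF open_UNIV V_convex])

lemma V_meas: "V \<in> borel_measurable borel"
  by (rule borel_measurable_continuous_onI[OF V_cont])

lemma V_hom_le: "V (t *\<^sub>R y) \<le> t\<^sup>2 * V y"
proof -
  have "V (t *\<^sub>R y) \<le> fm (t *\<^sub>R y) (t *\<^sub>R um y)" by (rule V_le)
  also have "\<dots> = t\<^sup>2 * fm y (um y)"
  proof -
    have "ns (t *\<^sub>R y - t *\<^sub>R um y) = \<bar>t\<bar> * ns (y - um y)"
      by (simp add: isn_scale[OF ns] flip: scaleR_diff_right)
    thus ?thesis by (simp add: fm_def isn_scale[OF nc] power_mult_distrib field_simps)
  qed
  finally show ?thesis by (simp add: um)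
qed

lemma V_hom: "V (t *\<^sub>R y) = t\<^sup>2 * V y"
proof (cases "t = 0")
  case True
  have "V 0 \<le> fm 0 0" by (rule V_le)
  hence "V 0 = 0" using V_nonneg[of 0] by (simp add: fm_def isn_zero[OF nc] isn_zero[OF ns])
  then show ?thesis using True by simp
next
  case False
  have "V y = V ((1/t) *\<^sub>R (t *\<^sub>R y))" using False by simp
  also have "\<dots> \<le> (1/t)\<^sup>2 * V (t *\<^sub>R y)" by (rule V_hom_le)
  finally have "t\<^sup>2 * V y \<le> V (t *\<^sub>R y)" using False by (simp add: field_simps)
  thus ?thesis using V_hom_le[of t y] by simp
qed

definition cL where "cL = 1 / (1 + mu / lcs\<^sup>2)"
definition cU where "cU = 1 / (1 + mu / ucs\<^sup>2)"

lemma cL_pos: "cL > 0" using mu lcs by (simp add: cL_def add_pos_pos)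
lemma cU_le1: "cU \<le> 1" "cU > 0" using mu ucs by (simp_all add: cU_def add_pos_pos)

lemma V_upper_bound: "2 * V y \<le> cU * (nc y)\<^sup>2"
proof -
  define k where "k = ucs\<^sup>2"
  have k: "k > 0" using ucs by (simp add: k_def)
  define t where "t = k / (k + mu)"
  have "V y \<le> fm y (t *\<^sub>R y)" by (rule V_le)
  also have "y - t *\<^sub>R y = (1 - t) *\<^sub>R y" by (simp add: algebra_simps)
  hence "fm y (t *\<^sub>R y) = (t * nc y)\<^sup>2 / 2 + (ns ((1 - t) *\<^sub>R y))\<^sup>2 / (2 * mu)"
    using k mu by (simp add: fm_def isn_scale[OF nc] t_def)
  also have "(ns ((1 - t) *\<^sub>R y))\<^sup>2 \<le> ((1 - t) * ucs * nc y)\<^sup>2"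
  proof -
    have t1: "0 \<le> 1 - t" using k mu by (simp add: t_def)
    have "ns ((1 - t) *\<^sub>R y) = (1 - t) * ns y" using t1 by (simp add: isn_scale[OF ns])
    also have "\<dots> \<le> (1 - t) * (ucs * nc y)" using t1 eqc2 by (simp add: mult_left_mono)
    finally show ?thesis using isn_nonneg[OF ns, of "(1 - t) *\<^sub>R y"]
      by (intro power_mono) (auto simp: mult.assoc)
  qed
  hence "(t * nc y)\<^sup>2 / 2 + (ns ((1 - t) *\<^sub>R y))\<^sup>2 / (2 * mu)
         \<le> (t * nc y)\<^sup>2 / 2 + ((1 - t) * ucs * nc y)\<^sup>2 / (2 * mu)"
    using mu by (simp add: divide_right_mono)
  also have "\<dots> = cU * (nc y)\<^sup>2 / 2"
  proof -
    have e0: "1 - t = mu / (k + mu)" using k mu by (simp add: t_def field_simps)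
    have e1: "((1 - t) * ucs * nc y)\<^sup>2 = (mu / (k + mu))\<^sup>2 * k * (nc y)\<^sup>2"
      unfolding e0 using k mu by (simp add: power2_eq_square k_def field_simps)
    have e2: "(t * nc y)\<^sup>2 = (k / (k + mu))\<^sup>2 * (nc y)\<^sup>2" unfolding t_def by (rule power_mult_distrib)
    have e3: "cU = k / (k + mu)" using k mu by (simp add: cU_def k_def field_simps)
    have "(k / (k + mu))\<^sup>2 * (nc y)\<^sup>2 / 2 + (mu / (k + mu))\<^sup>2 * k * (nc y)\<^sup>2 / (2 * mu)
          = k / (k + mu) * (nc y)\<^sup>2 / 2"
      by (rule alg_T2[OF k mu])
    thus ?thesis unfolding e1 e2 e3 .
  qed
  finally show ?thesis by simp
qed

lemma V_lower_bound: "cL * (nc y)\<^sup>2 \<le> 2 * V y"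
proof -
  define u where "u = um y"
  define a where "a = nc u" define b where "b = nc (y - u)"
  have ab: "a \<ge> 0" "b \<ge> 0" by (simp_all add: a_def b_def isn_nonneg[OF nc])
  have tri: "nc y \<le> a + b" using isn_tri[OF nc, of u "y - u"] by (simp add: a_def b_def)
  define l where "l = lcs\<^sup>2"
  have l: "l > 0" using lcs by (simp add: l_def)
  have "lcs * b \<le> ns (y - u)" unfolding b_def by (rule eqc1)
  hence "(lcs * b)\<^sup>2 \<le> (ns (y - u))\<^sup>2" using ab lcs by (intro power_mono) auto
  hence nsb: "l * b\<^sup>2 \<le> (ns (y - u))\<^sup>2" by (simp add: l_def power_mult_distrib)
  have "cL * (nc y)\<^sup>2 \<le> cL * (a + b)\<^sup>2"
    using tri cL_pos isn_nonneg[OF nc, of y] by (intro mult_left_mono power_mono) auto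
  also have "cL * (a + b)\<^sup>2 \<le> a\<^sup>2 + l * b\<^sup>2 / mu"
  proof -
    have "0 \<le> (mu * a - l * b)\<^sup>2" by simp
    hence key: "l * mu * (a + b)\<^sup>2 \<le> (l + mu) * (mu * a\<^sup>2 + l * b\<^sup>2)"
      by (simp add: power2_eq_square algebra_simps)
    have nz: "l + mu \<noteq> 0" "mu + l \<noteq> 0" "l \<noteq> 0" using l mu by auto
    have "cL = l / (l + mu)" using nz unfolding cL_def l_def[symmetric] by (simp add: field_simps)
    thus ?thesis using alg_T[OF l mu key] by simp
  qed
  also have "\<dots> \<le> a\<^sup>2 + (ns (y - u))\<^sup>2 / mu" using nsb mu by (simp add: divide_right_mono)
  also have "\<dots> = 2 * fm y u" by (simp add: fm_def a_def)
  also have "\<dots> = 2 * V y" by (simp add: u_def um)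
  finally show ?thesis .
qed

lemma V_sub: "V y + G y h \<le> V (y + h)"
proof -
  define K where "K = L / (2 * mu)"
  have K: "K \<ge> 0" using L_ge1 mu by (simp add: K_def)
  have l: "linear (G y)" by (rule G_lin)
  show ?thesis
  proof (rule eps_lemma)
    fix t :: real assume t: "0 < t" "t < 1"
    have "V (y + t *\<^sub>R h) = V ((1 - t) *\<^sub>R y + t *\<^sub>R (y + h))" by (simp add: algebra_simps)
    also have "\<dots> \<le> (1 - t) * V y + t * V (y + h)" using t by (intro V_conv) auto
    finally have c1: "V (y + t *\<^sub>R h) \<le> (1 - t) * V y + t * V (y + h)" .
    have e: "(y + t *\<^sub>R h) + (y - t *\<^sub>R h) = y + y" by simp
    have "(1/2) *\<^sub>R (y + t *\<^sub>R h) + (1/2) *\<^sub>R (y - t *\<^sub>R h) = y"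
      by (metis e scaleR_add_right scaleR_half_double)
    hence "V y = V ((1/2) *\<^sub>R (y + t *\<^sub>R h) + (1/2) *\<^sub>R (y - t *\<^sub>R h))" by simp
    also have "\<dots> \<le> (1/2) * V (y + t *\<^sub>R h) + (1/2) * V (y - t *\<^sub>R h)" by (intro V_conv) auto
    finally have c2: "2 * V y \<le> V (y + t *\<^sub>R h) + V (y - t *\<^sub>R h)" by simp
    have "V (y + (- t *\<^sub>R h)) \<le> V y + G y (- t *\<^sub>R h) + K * (ns (- t *\<^sub>R h))\<^sup>2"
      unfolding K_def by (rule V_upper)
    hence c3: "V (y - t *\<^sub>R h) \<le> V y - t * G y h + K * t\<^sup>2 * (ns h)\<^sup>2"
      using t by (simp add: linear_neg[OF l] linear_scale[OF l] isn_neg[OF ns] isn_scale[OF ns] power_mult_distrib)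
    have "t * (V y + G y h) \<le> t * (V (y + h) + t * (K * (ns h)\<^sup>2))"
      using c1 c2 c3 by (simp add: algebra_simps power2_eq_square)
    thus "V y + G y h \<le> V (y + h) + t * (K * (ns h)\<^sup>2)" using t by simp
  qed
qed

lemma G_self: "G y y = 2 * V y"
proof -
  have l: "linear (G y)" by (rule G_lin)
  have up: "G y y \<le> 2 * V y"
  proof (rule eps_lemma)
    fix t :: real assume t: "0 < t" "t < 1"
    have "V y + G y (t *\<^sub>R y) \<le> V (y + t *\<^sub>R y)" by (rule V_sub)
    also have "y + t *\<^sub>R y = (1 + t) *\<^sub>R y" by (simp add: algebra_simps)
    finally have "V y + t * G y y \<le> (1 + t)\<^sup>2 * V y" by (simp add: V_hom linear_scale[OF l])
    hence "t * G y y \<le> t * (2 * V y + t * V y)" by (simp add: power2_eq_square algebra_simps)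
    thus "G y y \<le> 2 * V y + t * V y" using t by simp
  qed
  have lo: "2 * V y \<le> G y y + 0"
  proof (rule eps_lemma)
    fix t :: real assume t: "0 < t" "t < 1"
    have "V y + G y (- t *\<^sub>R y) \<le> V (y + - t *\<^sub>R y)" by (rule V_sub)
    also have "y + - t *\<^sub>R y = (1 - t) *\<^sub>R y" by (simp add: algebra_simps)
    finally have "V y - t * G y y \<le> (1 - t)\<^sup>2 * V y" by (simp add: V_hom linear_scale[OF l] linear_neg[OF l])
    hence "t * (2 * V y) \<le> t * (G y y + 0 + t * V y)" by (simp add: power2_eq_square algebra_simps)
    thus "2 * V y \<le> G y y + 0 + t * V y" using t by simp
  qed
  show ?thesis using up lo by simp
qed

lemma G_quad: "s * G y z \<le> s\<^sup>2 * V z + V y"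
proof -
  have l: "linear (G y)" by (rule G_lin)
  have "V y + G y (s *\<^sub>R z - y) \<le> V (y + (s *\<^sub>R z - y))" by (rule V_sub)
  hence "V y + s * G y z - G y y \<le> V (s *\<^sub>R z)" by (simp add: linear_diff[OF l] linear_scale[OF l])
  thus ?thesis by (simp add: G_self V_hom)
qed

lemma V_eq0: assumes "V z = 0" shows "z = 0"
proof -
  have "cL * (nc z)\<^sup>2 \<le> 0" using V_lower_bound[of z] assms by simp
  hence "(nc z)\<^sup>2 \<le> 0" using cL_pos by (simp add: mult_le_0_iff)
  hence "nc z = 0" by simp
  thus ?thesis using isn_eq0[OF nc] by simp
qed

lemma G_bound: "G y z \<le> sqrt (2 * V y) * sqrt (2 * V z)"
proof -
  have l: "linear (G y)" by (rule G_lin)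
  consider "V z = 0" | "V z > 0" "V y = 0" | "V z > 0" "V y > 0" using V_nonneg[of z] V_nonneg[of y] by linarith
  then show ?thesis
  proof cases
    case 1 then have "z = 0" by (rule V_eq0)
    then show ?thesis using linear_0[OF l] V_nonneg[of y] V_nonneg[of 0] by simp
  next
    case 2
    have "G y z \<le> 0"
    proof (rule eps_lemma)
      fix t :: real assume t: "0 < t" "t < 1"
      have "t * G y z \<le> t * (t * V z)" using G_quad[of t y z] 2 by (simp add: power2_eq_square)
      thus "G y z \<le> 0 + t * V z" using t by simp
    qed
    then show ?thesis using 2 by simp
  next
    case 3
    define a where "a = sqrt (2 * V y)" define b where "b = sqrt (2 * V z)"
    have a: "a > 0" "a\<^sup>2 = 2 * V y" using 3 by (simp_all add: a_def)
    have b: "b > 0" "b\<^sup>2 = 2 * V z" using 3 by (simp_all add: b_def)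
    have "(a / b) * G y z \<le> (a / b)\<^sup>2 * V z + V y" by (rule G_quad)
    also have "\<dots> = a\<^sup>2" using alg_T3[of a b] a b by simp
    also have "a\<^sup>2 = (a / b) * (a * b)" using b by (simp add: power2_eq_square)
    finally have "(a / b) * G y z \<le> (a / b) * (a * b)" .
    hence "G y z \<le> a * b" by (metis mult_le_cancel_left_pos divide_pos_pos a(1) b(1))
    then show ?thesis by (simp add: a_def b_def)
  qed
qed

lemma G_abs: "\<bar>G y h\<bar> \<le> (nc y)\<^sup>2 + (nc h)\<^sup>2"
proof -
  have l: "linear (G y)" by (rule G_lin)
  have sq: "(nc (y + v))\<^sup>2 \<le> 2 * ((nc y)\<^sup>2 + (nc v)\<^sup>2)" for v
  proof -
    have "nc (y + v) \<le> nc y + nc v" by (rule isn_tri[OF nc])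
    hence "(nc (y + v))\<^sup>2 \<le> (nc y + nc v)\<^sup>2" using isn_nonneg[OF nc] by (intro power_mono) auto
    also have "\<dots> \<le> 2 * ((nc y)\<^sup>2 + (nc v)\<^sup>2)" using sum_squares_bound[of "nc y" "nc v"]
      by (simp add: power2_eq_square algebra_simps)
    finally show ?thesis .
  qed
  have bnd: "V (y + v) \<le> (nc y)\<^sup>2 + (nc v)\<^sup>2" for v
  proof -
    have "2 * V (y + v) \<le> cU * (nc (y + v))\<^sup>2" by (rule V_upper_bound)
    also have "\<dots> \<le> 1 * (nc (y + v))\<^sup>2" using cU_le1 by (intro mult_right_mono) auto
    finally show ?thesis using sq[of v] by simp
  qed
  have "G y h \<le> V (y + h) - V y" using V_sub[of y h] by simp
  also have "\<dots> \<le> (nc y)\<^sup>2 + (nc h)\<^sup>2" using bnd[of h] V_nonneg[of y] by simp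
  finally have 1: "G y h \<le> (nc y)\<^sup>2 + (nc h)\<^sup>2" .
  have "- G y h = G y (- h)" by (simp add: linear_neg[OF l])
  also have "\<dots> \<le> V (y + - h) - V y" using V_sub[of y "- h"] by simp
  also have "\<dots> \<le> (nc y)\<^sup>2 + (nc h)\<^sup>2" using bnd[of "- h"] V_nonneg[of y] by (simp add: isn_neg[OF nc])
  finally show ?thesis using 1 by simp
qed

lemma G_meas: "(\<lambda>y. G y h) \<in> borel_measurable borel"
proof -
  define K where "K = L / (2 * mu)"
  define q where "q = (\<lambda>i y. (V (y + (1 / real (Suc i)) *\<^sub>R h) - V y) * real (Suc i))"
  have [measurable]: "V \<in> borel_measurable borel" by (rule V_meas)
  have m: "q i \<in> borel_measurable borel" for i unfolding q_def by measurable
  have c: "(\<lambda>i. q i y) \<longlonglongrightarrow> G y h" for y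
  proof -
  have l: "linear (G y)" by (rule G_lin)
  have bnd: "\<bar>q i y - G y h\<bar> \<le> K * (ns h)\<^sup>2 / real (Suc i)" for i
  proof -
    define t where "t = 1 / real (Suc i)"
    have t: "t > 0" "real (Suc i) = 1 / t" by (simp_all add: t_def)
    have u: "V (y + t *\<^sub>R h) \<le> V y + t * G y h + K * t\<^sup>2 * (ns h)\<^sup>2"
      using V_upper[of y "t *\<^sub>R h"] t by (simp add: K_def linear_scale[OF l] isn_scale[OF ns] power_mult_distrib)
    have lo: "V y + t * G y h \<le> V (y + t *\<^sub>R h)" using V_sub[of y "t *\<^sub>R h"] by (simp add: linear_scale[OF l])
    have "(V (y + t *\<^sub>R h) - V y) / t - G y h \<ge> 0" using lo t by (simp add: field_simps)
    moreover have "(V (y + t *\<^sub>R h) - V y) / t - G y h \<le> K * (ns h)\<^sup>2 * t"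
      using u t by (simp add: field_simps power2_eq_square)
    ultimately show ?thesis using t unfolding q_def by (simp add: t_def divide_inverse)
  qed
  have "(\<lambda>i. K * (ns h)\<^sup>2 / real (Suc i)) \<longlonglongrightarrow> 0"
    using LIMSEQ_Suc[OF lim_const_over_n[of "K * (ns h)\<^sup>2"]] by simp
  hence "(\<lambda>i. q i y - G y h) \<longlonglongrightarrow> 0"
    by (rule Lim_null_comparison[rotated]) (use bnd in auto)
  hence "(\<lambda>i. q i y - G y h + G y h) \<longlonglongrightarrow> 0 + G y h"
    by (intro tendsto_intros)
  thus ?thesis by simp
  qed
  show ?thesis by (rule borel_measurable_LIMSEQ_real[OF c m])
qed


lemma G_expand: "G y v = (\<Sum>i\<in>UNIV. G y (axis i 1) * v $ i)"
proof -
  have l: "linear (G y)" by (rule G_lin)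
  have "G y v = G y (\<Sum>i\<in>UNIV. (v $ i) *\<^sub>R axis i (1::real))"
    using basis_expansion[of v] by (simp add: scalar_mult_eq_scaleR)
  also have "\<dots> = (\<Sum>i\<in>UNIV. v $ i * G y (axis i 1))" by (simp add: linear_sum[OF l] linear_scale[OF l])
  finally show ?thesis by (simp add: mult.commute)
qed

lemma V_le_nc: "V y \<le> (nc y)\<^sup>2"
proof -
  have "cU * (nc y)\<^sup>2 \<le> 1 * (nc y)\<^sup>2" using cU_le1 by (intro mult_right_mono) auto
  thus ?thesis using V_upper_bound[of y] V_nonneg[of y] by simp
qed

end

locale SAloc = moreau nc ns L mu lcs ucs + prob_space M
  for nc ns :: "real^'n \<Rightarrow> real" and L mu lcs ucs :: real and M :: "'a measure" +
  fixes ne :: "real^'n \<Rightarrow> real" and H :: "real^'n \<Rightarrow> real^'n"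
    and gam :: real and xs x0 :: "real^'n" and w :: "nat \<Rightarrow> 'a \<Rightarrow> real^'n"
    and A B eps les ues :: real
  assumes ne: "is_norm ne" and gam: "0 < gam" "gam < 1"
    and contr: "\<And>u v. nc (H u - H v) \<le> gam * nc (u - v)"
    and fixpt: "H xs = xs"
    and w_meas: "\<And>k. w k \<in> borel_measurable M"
    and w_mean: "\<And>k i. AE \<omega> in M. real_cond_exp M (SA_filt M (SA_iter H (\<lambda>_. eps) x0 w) w k) (\<lambda>\<omega>. w k \<omega> $ i) \<omega> = 0"
    and w_var: "\<And>k. AE \<omega> in M. nn_cond_exp M (SA_filt M (SA_iter H (\<lambda>_. eps) x0 w) w k) (\<lambda>\<omega>. ennreal ((ne (w k \<omega>))\<^sup>2)) \<omega>
                   \<le> ennreal (A + B * (ne (SA_iter H (\<lambda>_. eps) x0 w k \<omega>))\<^sup>2)"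
    and AB: "A > 0" "B > 0"
    and lcs1: "lcs \<le> 1"
    and les: "0 < les" "les \<le> 1" and ues: "1 \<le> ues"
    and eqe1: "\<And>u. les * ne u \<le> ns u" and eqe2: "\<And>u. ns u \<le> ues * ne u"
    and a2pos: "1 - gam * sqrt ((1 + mu / lcs\<^sup>2) / (1 + mu / ucs\<^sup>2)) > 0"
    and eps: "0 < eps" "eps \<le> (1 - gam * sqrt ((1 + mu / lcs\<^sup>2) / (1 + mu / ucs\<^sup>2)))
                 / (4 * ucs\<^sup>2 * ues\<^sup>2 * (B + 2) * L * (lcs\<^sup>2 + mu) / (mu * lcs\<^sup>2 * les\<^sup>2))"
begin

abbreviation "X \<equiv> SA_iter H (\<lambda>_. eps) x0 w"
abbreviation "F \<equiv> SA_filt M X w"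
abbreviation "a1 \<equiv> (1 + mu / lcs\<^sup>2) / (1 + mu / ucs\<^sup>2)"
abbreviation "a2 \<equiv> 1 - gam * sqrt a1"
abbreviation "a3 \<equiv> 4 * ucs\<^sup>2 * ues\<^sup>2 * (B + 2) * L * (lcs\<^sup>2 + mu) / (mu * lcs\<^sup>2 * les\<^sup>2)"
abbreviation "K \<equiv> L / (2 * mu)"
abbreviation "r \<equiv> ucs\<^sup>2 / les\<^sup>2"
abbreviation "C0 \<equiv> K * 2 * ues\<^sup>2 * r * (A + 2 * B * (nc xs)\<^sup>2)"

lemma K_nonneg: "K \<ge> 0" using L_ge1 mu by simp

lemma r_facts: "r \<ge> 1" "ucs\<^sup>2 \<le> r"
proof -
  have l2: "les\<^sup>2 \<le> 1" "les\<^sup>2 > 0" using les by (simp_all add: power_le_one)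
  have u2: "1 \<le> ucs\<^sup>2" using ucs by (simp add: one_le_power)
  show "r \<ge> 1" using l2 u2 by (simp add: le_divide_eq)
  show "ucs\<^sup>2 \<le> r" using l2 u2 by (simp add: le_divide_eq mult_left_le)
qed

lemma a1_eq: "a1 = cU / cL" by (simp add: cU_def cL_def)

lemma a3_eq: "a3 = K * 4 * ues\<^sup>2 * r * (B + 2) * 2 / cL"
proof -
  have p: "lcs\<^sup>2 + mu > 0" using mu lcs by (intro add_pos_pos) auto
  have nz: "mu \<noteq> 0" "lcs \<noteq> 0" "les \<noteq> 0" "lcs\<^sup>2 + mu \<noteq> 0" using mu lcs les p by auto
  show ?thesis using nz by (simp add: cL_def field_simps)
qed

lemma a3_ge1: "a3 \<ge> 1"
proof -
  have f1: "1 \<le> 4 * ucs\<^sup>2 * ues\<^sup>2 * (B + 2) * L"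
    using ucs ues AB L_ge1 by (intro ge1_mult) (auto simp: one_le_power)
  have f2: "1 \<le> (lcs\<^sup>2 + mu) / mu" using mu by simp
  have p: "lcs\<^sup>2 * les\<^sup>2 \<le> 1" "lcs\<^sup>2 * les\<^sup>2 > 0" using lcs lcs1 les
    by (auto simp: power_le_one mult_le_one)
  have f3: "1 \<le> 1 / (lcs\<^sup>2 * les\<^sup>2)" using p by simp
  have "a3 = (4 * ucs\<^sup>2 * ues\<^sup>2 * (B + 2) * L) * ((lcs\<^sup>2 + mu) / mu) * (1 / (lcs\<^sup>2 * les\<^sup>2))"
    by (simp add: field_simps)
  thus ?thesis using f1 f2 f3 by (metis ge1_mult)
qed

lemma a2_facts: "a2 > 0" "a2 \<le> 1" "a2 * eps \<le> 1" "a3 * eps \<le> a2"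
proof -
  show "a2 > 0" using a2pos .
  have "a1 > 0" using mu lcs ucs by (intro divide_pos_pos add_pos_nonneg) auto
  thus a21: "a2 \<le> 1" using gam by simp
  have a3p: "a3 > 0" using a3_ge1 by simp
  have "eps * a3 \<le> a2" using eps(2) by (subst (asm) pos_le_divide_eq[OF a3p])
  thus a3e: "a3 * eps \<le> a2" by (simp add: mult.commute)
  have "a2 * eps \<le> 1 * a3 * eps" using a21 eps a3_ge1 by (intro mult_right_mono) auto
  thus "a2 * eps \<le> 1" using a3e a21 by simp
qed

lemma H_cont: "continuous_on UNIV H"
proof -
  obtain c where c: "c > 0" "\<And>x. c * norm x \<le> nc x" using isn_lower[OF nc] by blast
  define C where "C = (\<Sum>i\<in>UNIV. nc (axis i 1))"
  have C: "C \<ge> 0" unfolding C_def by (intro sum_nonneg) (simp add: isn_nonneg[OF nc])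
  have "(gam * C / c)-lipschitz_on UNIV H"
  proof (rule lipschitz_onI)
    fix u v :: "real^'n"
    have "c * norm (H u - H v) \<le> nc (H u - H v)" by (rule c(2))
    also have "\<dots> \<le> gam * nc (u - v)" by (rule contr)
    also have "\<dots> \<le> gam * (C * norm (u - v))" using gam isn_upper[OF nc, of "u - v"]
      by (intro mult_left_mono) (auto simp: C_def)
    finally have "norm (H u - H v) \<le> gam * C / c * norm (u - v)" using c by (simp add: field_simps)
    thus "dist (H u) (H v) \<le> gam * C / c * dist u v" by (simp add: dist_norm)
  qed (use gam C c in auto)
  thus ?thesis by (rule lipschitz_on_continuous_on)
qed

lemma H_meas[measurable]: "H \<in> borel_measurable borel" by (rule borel_measurable_continuous_onI[OF H_cont])
lemma nc_meas[measurable]: "nc \<in> borel_measurable borel" by (rule isn_meas[OF nc])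
lemma ns_meas[measurable]: "ns \<in> borel_measurable borel" by (rule isn_meas[OF ns])
lemma ne_meas[measurable]: "ne \<in> borel_measurable borel" by (rule isn_meas[OF ne])
lemmas V_meas'[measurable] = V_meas
lemmas w_meas'[measurable] = w_meas

lemma X_meas[measurable]: "X k \<in> borel_measurable M"
proof (induction k)
  case 0 show ?case by simp
next
  case (Suc k)
  note [measurable] = Suc.IH
  show ?case by (simp only: SA_iter.simps) measurable
qed

definition gens where "gens k = (\<Union>j\<in>{..k}. {X j -` B \<inter> space M | B. B \<in> sets borel})
      \<union> (\<Union>j\<in>{..<k}. {w j -` B \<inter> space M | B. B \<in> sets borel})"

lemma F_eq: "F k = sigma (space M) (gens k)" by (simp add: SA_filt_def gens_def)
lemma gens_sub: "gens k \<subseteq> sets M"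
  by (auto simp: gens_def intro!: measurable_sets[OF X_meas] measurable_sets[OF w_meas])
lemma gens_pow: "gens k \<subseteq> Pow (space M)"
proof -
  have "A \<subseteq> space M" if "A \<in> gens k" for A using gens_sub that sets.sets_into_space by blast
  thus ?thesis by auto
qed
lemma space_F: "space (F k) = space M" unfolding F_eq by (rule space_measure_of[OF gens_pow])
lemma sets_F: "sets (F k) = sigma_sets (space M) (gens k)" unfolding F_eq by (rule sets_measure_of[OF gens_pow])
lemma subalg: "subalgebra M (F k)"
  unfolding subalgebra_def using space_F sets_F sets.sigma_sets_subset[OF gens_sub] by auto

lemma sfs: "sigma_finite_subalgebra M (F k)"
proof (rule finite_measure_subalgebra_is_sigma_finite)
  show "finite_measure_subalgebra M (F k)"
  proof (intro finite_measure_subalgebra.intro finite_measure_subalgebra_axioms.intro subalg)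
    show "finite_measure M" by (intro finite_measureI) simp
  qed
qed

lemma X_F: "X k \<in> borel_measurable (F k)"
proof (rule measurableI)
  fix A :: "(real^'n) set" assume A: "A \<in> sets borel"
  have "X k -` A \<inter> space M \<in> gens k" using A unfolding gens_def by blast
  thus "X k -` A \<inter> space (F k) \<in> sets (F k)" unfolding space_F sets_F by (rule sigma_sets.Basic)
qed simp

lemma Y_F: "(\<lambda>\<omega>. X k \<omega> - xs) \<in> borel_measurable (F k)"
  using X_F[of k] by measurable

lemma Y_suc: "X (Suc k) \<omega> - xs = (X k \<omega> - xs) + eps *\<^sub>R ((H (X k \<omega>) - H xs) - (X k \<omega> - xs) + w k \<omega>)"
  by (simp add: fixpt algebra_simps)

lemma nc_dd: "nc ((H x - H xs) - (x - xs)) \<le> 2 * nc (x - xs)"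
proof -
  have "nc ((H x - H xs) - (x - xs)) = nc ((H x - H xs) + - (x - xs))" by (simp only: diff_conv_add_uminus)
  also have "\<dots> \<le> nc (H x - H xs) + nc (x - xs)" using isn_tri[OF nc] isn_neg[OF nc] by metis
  also have "\<dots> \<le> gam * nc (x - xs) + nc (x - xs)" using contr by simp
  also have "\<dots> \<le> 2 * nc (x - xs)" using gam isn_nonneg[OF nc, of "x - xs"] mult_left_le_one_le[of "nc (x - xs)" gam] by simp
  finally show ?thesis .
qed

lemma ne_le_nc: "ne v \<le> ucs / les * nc v"
proof -
  have "les * ne v \<le> ucs * nc v" using eqe1[of v] eqc2[of v] by linarith
  thus ?thesis using les by (simp add: field_simps)
qed

lemma nc_le_ne: "nc v \<le> ues / lcs * ne v"
proof -
  have "lcs * nc v \<le> ues * ne v" using eqc1[of v] eqe2[of v] by linarith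
  thus ?thesis using lcs by (simp add: field_simps)
qed

lemma ne_sq_le: "(ne v)\<^sup>2 \<le> r * (nc v)\<^sup>2"
proof -
  have "(ne v)\<^sup>2 \<le> (ucs / les * nc v)\<^sup>2" using ne_le_nc isn_nonneg[OF ne] by (intro power_mono) auto
  thus ?thesis by (simp add: power_mult_distrib power_divide)
qed

lemma V_step:
  fixes x wv :: "real^'n"
  defines "y \<equiv> x - xs"
  shows "V (y + eps *\<^sub>R ((H x - H xs) - y + wv)) \<le> (1 - 2 * a2 * eps) * V y + eps * G y wv
           + K * eps\<^sup>2 * (8 * ucs\<^sup>2 * (nc y)\<^sup>2 + 2 * ues\<^sup>2 * (ne wv)\<^sup>2)"
proof -
  define z where "z = H x - H xs"
  define dd where "dd = z - y"
  have l: "linear (G y)" by (rule G_lin)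
  have 1: "V (y + eps *\<^sub>R (dd + wv)) \<le> V y + G y (eps *\<^sub>R (dd + wv)) + K * (ns (eps *\<^sub>R (dd + wv)))\<^sup>2"
    by (rule V_upper)
  have 2: "G y (eps *\<^sub>R (dd + wv)) = eps * (G y z - G y y) + eps * G y wv"
    by (simp add: dd_def linear_scale[OF l] linear_add[OF l] linear_diff[OF l] algebra_simps)
  have ncz: "nc z \<le> gam * nc y" unfolding z_def y_def by (rule contr)
  have 4: "sqrt (2 * V z) \<le> gam * sqrt a1 * sqrt (2 * V y)"
  proof -
    have "2 * V z \<le> cU * (nc z)\<^sup>2" by (rule V_upper_bound)
    also have "\<dots> \<le> cU * (gam * nc y)\<^sup>2" using ncz cU_le1 isn_nonneg[OF nc, of z]
      by (intro mult_left_mono power_mono) auto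
    also have "\<dots> = cU * gam\<^sup>2 * (nc y)\<^sup>2" by (simp add: power_mult_distrib)
    also have "(nc y)\<^sup>2 \<le> 2 * V y / cL" using V_lower_bound[of y] cL_pos by (simp add: field_simps)
    hence "cU * gam\<^sup>2 * (nc y)\<^sup>2 \<le> cU * gam\<^sup>2 * (2 * V y / cL)" using cU_le1 by (intro mult_left_mono) auto
    also have "\<dots> = gam\<^sup>2 * a1 * (2 * V y)" unfolding a1_eq by simp
    finally have "2 * V z \<le> gam\<^sup>2 * a1 * (2 * V y)" .
    hence "sqrt (2 * V z) \<le> sqrt (gam\<^sup>2 * a1 * (2 * V y))" by (rule real_sqrt_le_mono)
    also have "\<dots> = sqrt (gam\<^sup>2) * sqrt a1 * sqrt (2 * V y)" by (simp only: real_sqrt_mult)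
    also have "sqrt (gam\<^sup>2) = gam" using gam by simp
    finally show ?thesis .
  qed
  have 5: "G y z - G y y \<le> - 2 * a2 * V y"
  proof -
    have "G y z \<le> sqrt (2 * V y) * sqrt (2 * V z)" by (rule G_bound)
    also have "\<dots> \<le> sqrt (2 * V y) * (gam * sqrt a1 * sqrt (2 * V y))" using 4 V_nonneg[of y] by (intro mult_left_mono) auto
    also have "\<dots> = gam * sqrt a1 * (2 * V y)" using V_nonneg[of y] by simp
    finally show ?thesis using G_self[of y] by (simp add: algebra_simps)
  qed
  have 6: "(ns (eps *\<^sub>R (dd + wv)))\<^sup>2 \<le> eps\<^sup>2 * (8 * ucs\<^sup>2 * (nc y)\<^sup>2 + 2 * ues\<^sup>2 * (ne wv)\<^sup>2)"
  proof -
    have "(ns (eps *\<^sub>R (dd + wv)))\<^sup>2 = eps\<^sup>2 * (ns (dd + wv))\<^sup>2"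
      using eps by (simp add: isn_scale[OF ns] power_mult_distrib)
    moreover have "(ns (dd + wv))\<^sup>2 \<le> 2 * (ns dd)\<^sup>2 + 2 * (ns wv)\<^sup>2" by (rule sq_tri[OF ns])
    moreover have "(ns dd)\<^sup>2 \<le> 4 * ucs\<^sup>2 * (nc y)\<^sup>2"
    proof -
      have "ns dd \<le> ucs * nc dd" by (rule eqc2)
      also have "\<dots> \<le> ucs * (2 * nc y)" using nc_dd[of x] ucs unfolding dd_def z_def y_def
        by (intro mult_left_mono) auto
      finally have "(ns dd)\<^sup>2 \<le> (ucs * (2 * nc y))\<^sup>2" using isn_nonneg[OF ns, of dd] by (intro power_mono) auto
      thus ?thesis by (simp add: power_mult_distrib)
    qed
    moreover have "(ns wv)\<^sup>2 \<le> ues\<^sup>2 * (ne wv)\<^sup>2"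
    proof -
      have "(ns wv)\<^sup>2 \<le> (ues * ne wv)\<^sup>2" using eqe2[of wv] isn_nonneg[OF ns, of wv] by (intro power_mono) auto
      thus ?thesis by (simp add: power_mult_distrib)
    qed
    ultimately show ?thesis using eps by (simp add: mult_left_mono)
  qed
  have "V (y + eps *\<^sub>R ((H x - H xs) - y + wv)) = V (y + eps *\<^sub>R (dd + wv))"
    by (simp add: dd_def z_def)
  also have "\<dots> \<le> V y + eps * (G y z - G y y) + eps * G y wv + K * (eps\<^sup>2 * (8 * ucs\<^sup>2 * (nc y)\<^sup>2 + 2 * ues\<^sup>2 * (ne wv)\<^sup>2))"
    using 1 2 6 K_nonneg mult_left_mono[OF 6 K_nonneg] by linarith
  also have "eps * (G y z - G y y) \<le> eps * (- 2 * a2 * V y)" using 5 eps by (intro mult_left_mono) auto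
  finally show ?thesis by (simp add: algebra_simps)
qed


lemma Y_meas[measurable]: "(\<lambda>\<omega>. X k \<omega> - xs) \<in> borel_measurable M" by measurable

lemma bX: "(ne (X k \<omega>))\<^sup>2 \<le> 2 * r * (nc (X k \<omega> - xs))\<^sup>2 + 2 * (ne xs)\<^sup>2"
proof -
  have e: "(X k \<omega> - xs) + xs = X k \<omega>" by simp
  have "(ne (X k \<omega>))\<^sup>2 \<le> 2 * (ne (X k \<omega> - xs))\<^sup>2 + 2 * (ne xs)\<^sup>2"
    using sq_tri[OF ne, of "X k \<omega> - xs" xs] by (simp only: e)
  thus ?thesis using ne_sq_le[of "X k \<omega> - xs"] by linarith
qed

lemma noise:
  assumes I: "integrable M (\<lambda>\<omega>. (nc (X k \<omega> - xs))\<^sup>2)"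
  shows noise_int: "integrable M (\<lambda>\<omega>. (ne (w k \<omega>))\<^sup>2)"
    and noise_bnd: "(\<integral>\<omega>. (ne (w k \<omega>))\<^sup>2 \<partial>M) \<le> A + B * (\<integral>\<omega>. (ne (X k \<omega>))\<^sup>2 \<partial>M)"
    and noise_X: "integrable M (\<lambda>\<omega>. (ne (X k \<omega>))\<^sup>2)"
proof -
  have iX: "integrable M (\<lambda>\<omega>. (ne (X k \<omega>))\<^sup>2)"
  proof (rule int_bnd[where f="\<lambda>\<omega>. 2 * r * (nc (X k \<omega> - xs))\<^sup>2 + 2 * (ne xs)\<^sup>2"])
    show "integrable M (\<lambda>\<omega>. 2 * r * (nc (X k \<omega> - xs))\<^sup>2 + 2 * (ne xs)\<^sup>2)"
      by (intro Bochner_Integration.integrable_add integrable_mult_right I integrable_const)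
    show "(\<lambda>\<omega>. (ne (X k \<omega>))\<^sup>2) \<in> borel_measurable M" by measurable
    show "\<bar>(ne (X k \<omega>))\<^sup>2\<bar> \<le> 2 * r * (nc (X k \<omega> - xs))\<^sup>2 + 2 * (ne xs)\<^sup>2" for \<omega> using bX[of k \<omega>] by simp
  qed
  show "integrable M (\<lambda>\<omega>. (ne (X k \<omega>))\<^sup>2)" by (rule iX)
  have gm: "(\<lambda>\<omega>. ennreal ((ne (w k \<omega>))\<^sup>2)) \<in> borel_measurable M" by measurable
  have iA: "integrable M (\<lambda>\<omega>. A + B * (ne (X k \<omega>))\<^sup>2)"
    by (intro Bochner_Integration.integrable_add integrable_mult_right iX integrable_const)
  have "(\<integral>\<^sup>+\<omega>. ennreal ((ne (w k \<omega>))\<^sup>2) \<partial>M) = (\<integral>\<^sup>+\<omega>. (\<lambda>_. 1) \<omega> * ennreal ((ne (w k \<omega>))\<^sup>2) \<partial>M)" by simp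
  also have "\<dots> = (\<integral>\<^sup>+\<omega>. (\<lambda>_. 1) \<omega> * nn_cond_exp M (F k) (\<lambda>\<omega>. ennreal ((ne (w k \<omega>))\<^sup>2)) \<omega> \<partial>M)"
    by (rule sigma_finite_subalgebra.nn_cond_exp_intg[OF sfs, symmetric]) (auto simp: gm)
  also have "\<dots> \<le> (\<integral>\<^sup>+\<omega>. ennreal (A + B * (ne (X k \<omega>))\<^sup>2) \<partial>M)"
    by (rule nn_integral_mono_AE) (use w_var[of k] in auto)
  also have "\<dots> = ennreal (\<integral>\<omega>. A + B * (ne (X k \<omega>))\<^sup>2 \<partial>M)"
    by (rule nn_integral_eq_integral[OF iA]) (use AB in auto)
  also have "(\<integral>\<omega>. A + B * (ne (X k \<omega>))\<^sup>2 \<partial>M) = A + B * (\<integral>\<omega>. (ne (X k \<omega>))\<^sup>2 \<partial>M)"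
    by (simp add: Bochner_Integration.integral_add[OF integrable_const integrable_mult_right[OF iX]] prob_space)
  finally have le: "(\<integral>\<^sup>+\<omega>. ennreal ((ne (w k \<omega>))\<^sup>2) \<partial>M) \<le> ennreal (A + B * (\<integral>\<omega>. (ne (X k \<omega>))\<^sup>2 \<partial>M))" .
  show wi: "integrable M (\<lambda>\<omega>. (ne (w k \<omega>))\<^sup>2)"
  proof (rule integrableI_nonneg)
    show "(\<lambda>\<omega>. (ne (w k \<omega>))\<^sup>2) \<in> borel_measurable M" by measurable
    show "AE x in M. 0 \<le> (ne (w k x))\<^sup>2" by simp
    show "(\<integral>\<^sup>+\<omega>. ennreal ((ne (w k \<omega>))\<^sup>2) \<partial>M) < \<infinity>" using le_less_trans[OF le ennreal_less_top] by simp
  qed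
  have "ennreal (\<integral>\<omega>. (ne (w k \<omega>))\<^sup>2 \<partial>M) = (\<integral>\<^sup>+\<omega>. ennreal ((ne (w k \<omega>))\<^sup>2) \<partial>M)"
    by (rule nn_integral_eq_integral[symmetric, OF wi]) simp
  with le have le2: "ennreal (\<integral>\<omega>. (ne (w k \<omega>))\<^sup>2 \<partial>M) \<le> ennreal (A + B * (\<integral>\<omega>. (ne (X k \<omega>))\<^sup>2 \<partial>M))" by simp
  have "0 \<le> (\<integral>\<omega>. (ne (X k \<omega>))\<^sup>2 \<partial>M)" by (rule integral_nonneg_AE) simp
  hence "0 \<le> A + B * (\<integral>\<omega>. (ne (X k \<omega>))\<^sup>2 \<partial>M)" using AB by simp
  thus "(\<integral>\<omega>. (ne (w k \<omega>))\<^sup>2 \<partial>M) \<le> A + B * (\<integral>\<omega>. (ne (X k \<omega>))\<^sup>2 \<partial>M)"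
    using le2 by (subst (asm) ennreal_le_iff) auto
qed

lemma zero_mean:
  assumes I: "integrable M (\<lambda>\<omega>. (nc (X k \<omega> - xs))\<^sup>2)"
  shows zm_int: "integrable M (\<lambda>\<omega>. G (X k \<omega> - xs) (w k \<omega>))"
    and zm_zero: "(\<integral>\<omega>. G (X k \<omega> - xs) (w k \<omega>) \<partial>M) = 0"
proof -
  obtain c where c: "c > 0" "\<And>x. c * norm x \<le> ne x" using isn_lower[OF ne] by blast
  have iW: "integrable M (\<lambda>\<omega>. (ne (w k \<omega>))\<^sup>2)" by (rule noise_int[OF I])
  define f where "f i \<omega> = G (X k \<omega> - xs) (axis i 1)" for i \<omega>
  have fF: "f i \<in> borel_measurable (F k)" for i
    unfolding f_def using measurable_compose[OF Y_F G_meas] by simp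
  have fM: "f i \<in> borel_measurable M" for i by (rule measurable_from_subalg[OF subalg fF])
  have vn: "(\<lambda>x::real^'n. x $ i) \<in> borel_measurable borel" for i
    by (rule borel_measurable_continuous_onI) (intro linear_continuous_on bounded_linear_vec_nth)
  have wi_meas: "(\<lambda>\<omega>. w k \<omega> $ i) \<in> borel_measurable M" for i
    using measurable_compose[OF w_meas vn] by simp
  have fw_int: "integrable M (\<lambda>\<omega>. f i \<omega> * w k \<omega> $ i)" for i
  proof (rule int_bnd[where f="\<lambda>\<omega>. (nc (X k \<omega> - xs))\<^sup>2 + (nc (axis i 1))\<^sup>2 / c\<^sup>2 * (ne (w k \<omega>))\<^sup>2"])
    show "integrable M (\<lambda>\<omega>. (nc (X k \<omega> - xs))\<^sup>2 + (nc (axis i 1))\<^sup>2 / c\<^sup>2 * (ne (w k \<omega>))\<^sup>2)"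
      by (intro Bochner_Integration.integrable_add integrable_mult_right I iW)
    show "(\<lambda>\<omega>. f i \<omega> * w k \<omega> $ i) \<in> borel_measurable M" by (intro borel_measurable_times fM wi_meas)
    fix \<omega>
    have l: "linear (G (X k \<omega> - xs))" by (rule G_lin)
    have b1: "\<bar>f i \<omega> * w k \<omega> $ i\<bar> \<le> (nc (X k \<omega> - xs))\<^sup>2 + (nc ((w k \<omega> $ i) *\<^sub>R axis i 1))\<^sup>2"
    proof -
      have "f i \<omega> * w k \<omega> $ i = G (X k \<omega> - xs) ((w k \<omega> $ i) *\<^sub>R axis i 1)"
        by (simp add: f_def linear_scale[OF l] mult.commute)
      thus ?thesis using G_abs by simp
    qed
    have b2: "(nc ((w k \<omega> $ i) *\<^sub>R axis i 1))\<^sup>2 = (w k \<omega> $ i)\<^sup>2 * (nc (axis i 1))\<^sup>2"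
      by (simp add: isn_scale[OF nc] power_mult_distrib)
    have b3: "(w k \<omega> $ i)\<^sup>2 \<le> (ne (w k \<omega>))\<^sup>2 / c\<^sup>2"
    proof -
      have "\<bar>w k \<omega> $ i\<bar> \<le> norm (w k \<omega>)" by (rule component_le_norm_cart)
      also have "norm (w k \<omega>) \<le> ne (w k \<omega>) / c" using c by (simp add: pos_le_divide_eq mult.commute)
      finally have "\<bar>w k \<omega> $ i\<bar> \<le> ne (w k \<omega>) / c" .
      hence "\<bar>w k \<omega> $ i\<bar>\<^sup>2 \<le> (ne (w k \<omega>) / c)\<^sup>2" by (intro power_mono) auto
      thus ?thesis by (simp add: power_divide)
    qed
    have b4: "(w k \<omega> $ i)\<^sup>2 * (nc (axis i 1))\<^sup>2 \<le> (nc (axis i 1))\<^sup>2 / c\<^sup>2 * (ne (w k \<omega>))\<^sup>2"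
    proof -
      have "(w k \<omega> $ i)\<^sup>2 * (nc (axis i 1))\<^sup>2 \<le> (ne (w k \<omega>))\<^sup>2 / c\<^sup>2 * (nc (axis i 1))\<^sup>2"
        using b3 by (intro mult_right_mono) auto
      thus ?thesis by (simp add: field_simps)
    qed
    show "\<bar>f i \<omega> * w k \<omega> $ i\<bar> \<le> (nc (X k \<omega> - xs))\<^sup>2 + (nc (axis i 1))\<^sup>2 / c\<^sup>2 * (ne (w k \<omega>))\<^sup>2"
      using b1 b2 b4 by linarith
  qed
  have fz: "(\<integral>\<omega>. f i \<omega> * w k \<omega> $ i \<partial>M) = 0" for i
  proof -
    have "(\<integral>\<omega>. f i \<omega> * w k \<omega> $ i \<partial>M) = (\<integral>\<omega>. f i \<omega> * real_cond_exp M (F k) (\<lambda>\<omega>. w k \<omega> $ i) \<omega> \<partial>M)"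
      by (rule sigma_finite_subalgebra.real_cond_exp_intg(2)[OF sfs fw_int fF wi_meas, symmetric])
    also have "\<dots> = 0" by (rule integral_eq_zero_AE) (use w_mean[of k i] in auto)
    finally show ?thesis .
  qed
  have expand: "G (X k \<omega> - xs) (w k \<omega>) = (\<Sum>i\<in>UNIV. f i \<omega> * w k \<omega> $ i)" for \<omega>
    by (simp add: f_def G_expand[of _ "w k \<omega>"])
  show "integrable M (\<lambda>\<omega>. G (X k \<omega> - xs) (w k \<omega>))" unfolding expand by (rule Bochner_Integration.integrable_sum) (rule fw_int)
  show "(\<integral>\<omega>. G (X k \<omega> - xs) (w k \<omega>) \<partial>M) = 0" unfolding expand by (simp add: Bochner_Integration.integral_sum fw_int fz)
qed

lemma all_int: "integrable M (\<lambda>\<omega>. (nc (X k \<omega> - xs))\<^sup>2)"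
proof (induction k)
  case 0 show ?case by simp
next
  case (Suc k)
  have iW: "integrable M (\<lambda>\<omega>. (ne (w k \<omega>))\<^sup>2)" by (rule noise_int[OF Suc.IH])
  show ?case
  proof (rule int_bnd[where f="\<lambda>\<omega>. 2 * (1 + 2 * eps)\<^sup>2 * (nc (X k \<omega> - xs))\<^sup>2 + 2 * (eps * (ues / lcs))\<^sup>2 * (ne (w k \<omega>))\<^sup>2"])
    show "integrable M (\<lambda>\<omega>. 2 * (1 + 2 * eps)\<^sup>2 * (nc (X k \<omega> - xs))\<^sup>2 + 2 * (eps * (ues / lcs))\<^sup>2 * (ne (w k \<omega>))\<^sup>2)"
      by (intro Bochner_Integration.integrable_add integrable_mult_right Suc.IH iW)
    show "(\<lambda>\<omega>. (nc (X (Suc k) \<omega> - xs))\<^sup>2) \<in> borel_measurable M" by measurable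
    fix \<omega>
    define y where "y = X k \<omega> - xs"
    define dd where "dd = (H (X k \<omega>) - H xs) - y"
    define wv where "wv = w k \<omega>"
    have e: "X (Suc k) \<omega> - xs = y + eps *\<^sub>R (dd + wv)" unfolding y_def dd_def wv_def by (rule Y_suc)
    have t1: "nc (y + eps *\<^sub>R (dd + wv)) \<le> nc y + eps * nc (dd + wv)"
      using isn_tri[OF nc, of y "eps *\<^sub>R (dd + wv)"] eps by (simp add: isn_scale[OF nc])
    have t3: "nc (dd + wv) \<le> 2 * nc y + ues / lcs * ne wv"
      using isn_tri[OF nc, of dd wv] nc_dd[of "X k \<omega>"] nc_le_ne[of wv] unfolding dd_def y_def by linarith
    have "eps * nc (dd + wv) \<le> eps * (2 * nc y + ues / lcs * ne wv)" using t3 eps by (intro mult_left_mono) auto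
    hence t4: "nc (y + eps *\<^sub>R (dd + wv)) \<le> (1 + 2 * eps) * nc y + eps * (ues / lcs) * ne wv"
      using t1 by (simp add: algebra_simps)
    hence "(nc (y + eps *\<^sub>R (dd + wv)))\<^sup>2 \<le> ((1 + 2 * eps) * nc y + eps * (ues / lcs) * ne wv)\<^sup>2"
      using isn_nonneg[OF nc] by (intro power_mono) auto
    also have "\<dots> \<le> 2 * ((1 + 2 * eps) * nc y)\<^sup>2 + 2 * (eps * (ues / lcs) * ne wv)\<^sup>2" by (rule sq_tri_real)
    also have "\<dots> = 2 * (1 + 2 * eps)\<^sup>2 * (nc y)\<^sup>2 + 2 * (eps * (ues / lcs))\<^sup>2 * (ne wv)\<^sup>2"
      by (simp only: power_mult_distrib mult.assoc)
    finally show "\<bar>(nc (X (Suc k) \<omega> - xs))\<^sup>2\<bar> \<le> 2 * (1 + 2 * eps)\<^sup>2 * (nc (X k \<omega> - xs))\<^sup>2 + 2 * (eps * (ues / lcs))\<^sup>2 * (ne (w k \<omega>))\<^sup>2"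
      unfolding e by (simp add: y_def wv_def)
  qed
qed

lemma V_int: "integrable M (\<lambda>\<omega>. V (X k \<omega> - xs))"
proof (rule int_bnd[OF all_int])
  show "(\<lambda>\<omega>. V (X k \<omega> - xs)) \<in> borel_measurable M" by measurable
  show "\<bar>V (X k \<omega> - xs)\<bar> \<le> (nc (X k \<omega> - xs))\<^sup>2" for \<omega> using V_nonneg V_le_nc by simp
qed

lemma drift:
  "(\<integral>\<omega>. V (X (Suc k) \<omega> - xs) \<partial>M) \<le> (1 - 2 * a2 * eps) * (\<integral>\<omega>. V (X k \<omega> - xs) \<partial>M)
     + K * eps\<^sup>2 * (8 * ucs\<^sup>2 * (\<integral>\<omega>. (nc (X k \<omega> - xs))\<^sup>2 \<partial>M) + 2 * ues\<^sup>2 * (\<integral>\<omega>. (ne (w k \<omega>))\<^sup>2 \<partial>M))"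
proof -
  have I: "integrable M (\<lambda>\<omega>. (nc (X k \<omega> - xs))\<^sup>2)" by (rule all_int)
  have iW: "integrable M (\<lambda>\<omega>. (ne (w k \<omega>))\<^sup>2)" by (rule noise_int[OF I])
  have iG: "integrable M (\<lambda>\<omega>. G (X k \<omega> - xs) (w k \<omega>))" by (rule zm_int[OF I])
  define f1 where "f1 \<omega> = (1 - 2 * a2 * eps) * V (X k \<omega> - xs)" for \<omega>
  define f2 where "f2 \<omega> = eps * G (X k \<omega> - xs) (w k \<omega>)" for \<omega>
  define f3 where "f3 \<omega> = K * eps\<^sup>2 * (8 * ucs\<^sup>2 * (nc (X k \<omega> - xs))\<^sup>2 + 2 * ues\<^sup>2 * (ne (w k \<omega>))\<^sup>2)" for \<omega>
  have i1: "integrable M f1" unfolding f1_def by (intro integrable_mult_right V_int)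
  have i2: "integrable M f2" unfolding f2_def by (intro integrable_mult_right iG)
  have i4: "integrable M (\<lambda>\<omega>. 8 * ucs\<^sup>2 * (nc (X k \<omega> - xs))\<^sup>2)" by (intro integrable_mult_right I)
  have i5: "integrable M (\<lambda>\<omega>. 2 * ues\<^sup>2 * (ne (w k \<omega>))\<^sup>2)" by (intro integrable_mult_right iW)
  have i3: "integrable M f3" unfolding f3_def by (intro integrable_mult_right Bochner_Integration.integrable_add i4 i5)
  have i12: "integrable M (\<lambda>\<omega>. f1 \<omega> + f2 \<omega>)" by (intro Bochner_Integration.integrable_add i1 i2)
  have iR: "integrable M (\<lambda>\<omega>. f1 \<omega> + f2 \<omega> + f3 \<omega>)" by (intro Bochner_Integration.integrable_add i12 i3)
  have pt: "V (X (Suc k) \<omega> - xs) \<le> f1 \<omega> + f2 \<omega> + f3 \<omega>" for \<omega>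
    unfolding Y_suc f1_def f2_def f3_def by (rule V_step)
  have "(\<integral>\<omega>. V (X (Suc k) \<omega> - xs) \<partial>M) \<le> (\<integral>\<omega>. f1 \<omega> + f2 \<omega> + f3 \<omega> \<partial>M)"
    by (rule integral_mono[OF V_int iR]) (rule pt)
  also have "\<dots> = (\<integral>\<omega>. f1 \<omega> \<partial>M) + (\<integral>\<omega>. f2 \<omega> \<partial>M) + (\<integral>\<omega>. f3 \<omega> \<partial>M)"
    by (simp add: Bochner_Integration.integral_add[OF i12 i3] Bochner_Integration.integral_add[OF i1 i2])
  also have "(\<integral>\<omega>. f2 \<omega> \<partial>M) = 0" unfolding f2_def using zm_zero[OF I] by simp
  also have "(\<integral>\<omega>. f1 \<omega> \<partial>M) = (1 - 2 * a2 * eps) * (\<integral>\<omega>. V (X k \<omega> - xs) \<partial>M)" unfolding f1_def by simp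
  also have "(\<integral>\<omega>. f3 \<omega> \<partial>M) = K * eps\<^sup>2 * (8 * ucs\<^sup>2 * (\<integral>\<omega>. (nc (X k \<omega> - xs))\<^sup>2 \<partial>M) + 2 * ues\<^sup>2 * (\<integral>\<omega>. (ne (w k \<omega>))\<^sup>2 \<partial>M))"
    unfolding f3_def by (simp add: Bochner_Integration.integral_add[OF i4 i5])
  finally show ?thesis by simp
qed

lemma rec_step: "(\<integral>\<omega>. V (X (Suc k) \<omega> - xs) \<partial>M) \<le> (1 - a2 * eps) * (\<integral>\<omega>. V (X k \<omega> - xs) \<partial>M) + eps\<^sup>2 * C0"
proof -
  have I: "integrable M (\<lambda>\<omega>. (nc (X k \<omega> - xs))\<^sup>2)" by (rule all_int)
  have iX: "integrable M (\<lambda>\<omega>. (ne (X k \<omega>))\<^sup>2)" by (rule noise_X[OF I])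
  have a0: "0 \<le> (\<integral>\<omega>. V (X k \<omega> - xs) \<partial>M)" by (rule integral_nonneg_AE) (simp add: V_nonneg)
  have Q0: "0 \<le> (\<integral>\<omega>. (nc (X k \<omega> - xs))\<^sup>2 \<partial>M)" by (rule integral_nonneg_AE) simp
  have h4: "cL * (\<integral>\<omega>. (nc (X k \<omega> - xs))\<^sup>2 \<partial>M) \<le> 2 * (\<integral>\<omega>. V (X k \<omega> - xs) \<partial>M)"
  proof -
    have "(\<integral>\<omega>. cL * (nc (X k \<omega> - xs))\<^sup>2 \<partial>M) \<le> (\<integral>\<omega>. 2 * V (X k \<omega> - xs) \<partial>M)"
      by (rule integral_mono) (auto intro!: integrable_mult_right I V_int V_lower_bound)
    thus ?thesis by simp
  qed
  have h3: "(\<integral>\<omega>. (ne (X k \<omega>))\<^sup>2 \<partial>M) \<le> 2 * r * ((\<integral>\<omega>. (nc (X k \<omega> - xs))\<^sup>2 \<partial>M) + (nc xs)\<^sup>2)"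
  proof -
    have ib: "integrable M (\<lambda>\<omega>. 2 * r * (nc (X k \<omega> - xs))\<^sup>2 + 2 * r * (nc xs)\<^sup>2)"
      by (intro Bochner_Integration.integrable_add integrable_mult_right I integrable_const)
    have "(\<integral>\<omega>. (ne (X k \<omega>))\<^sup>2 \<partial>M) \<le> (\<integral>\<omega>. 2 * r * (nc (X k \<omega> - xs))\<^sup>2 + 2 * r * (nc xs)\<^sup>2 \<partial>M)"
    proof (rule integral_mono[OF iX ib])
      fix \<omega>
      show "(ne (X k \<omega>))\<^sup>2 \<le> 2 * r * (nc (X k \<omega> - xs))\<^sup>2 + 2 * r * (nc xs)\<^sup>2"
        using bX[of k \<omega>] ne_sq_le[of xs] by linarith
    qed
    also have "\<dots> = 2 * r * (\<integral>\<omega>. (nc (X k \<omega> - xs))\<^sup>2 \<partial>M) + 2 * r * (nc xs)\<^sup>2"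
      by (subst Bochner_Integration.integral_add[OF integrable_mult_right[OF I] integrable_const]) (simp add: prob_space)
    finally show ?thesis by (simp add: algebra_simps)
  qed
  have small: "K * 4 * ues\<^sup>2 * r * (B + 2) * 2 / cL * eps \<le> a2" using a2_facts(4) unfolding a3_eq .
  show ?thesis
    by (rule alg_step[OF drift noise_bnd[OF I] h3 h4 a0 Q0 K_nonneg eps(1) AB(2) AB(1) r_facts(1) r_facts(2) ues cL_pos small])
qed

lemma C0_nonneg: "C0 \<ge> 0"
  using K_nonneg r_facts(1) AB by (intro mult_nonneg_nonneg add_nonneg_nonneg) auto

lemma sol: "(\<integral>\<omega>. V (X k \<omega> - xs) \<partial>M) \<le> (1 - a2 * eps) ^ k * V (x0 - xs) + eps * C0 / a2"
proof -
  have q: "0 \<le> 1 - a2 * eps" "1 - a2 * eps < 1" using a2_facts eps by auto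
  have b: "0 \<le> eps\<^sup>2 * C0" by (rule mult_nonneg_nonneg[OF _ C0_nonneg]) simp
  have "(\<integral>\<omega>. V (X k \<omega> - xs) \<partial>M) \<le> (1 - a2 * eps) ^ k * (\<integral>\<omega>. V (X 0 \<omega> - xs) \<partial>M) + eps\<^sup>2 * C0 / (1 - (1 - a2 * eps))"
    by (rule rec_sol[where a="\<lambda>k. \<integral>\<omega>. V (X k \<omega> - xs) \<partial>M", OF rec_step q b])
  also have "(\<integral>\<omega>. V (X 0 \<omega> - xs) \<partial>M) = V (x0 - xs)" by (simp add: prob_space)
  also have "eps\<^sup>2 * C0 / (1 - (1 - a2 * eps)) = eps * C0 / a2" using eps a2_facts by (simp add: power2_eq_square)
  finally show ?thesis .
qed

lemma main_bound: "(\<integral>\<^sup>+\<omega>. ennreal ((nc (X k \<omega> - xs))\<^sup>2) \<partial>M)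
   \<le> ennreal (a1 * (nc (x0 - xs))\<^sup>2 * (1 - a2 * eps) ^ k + (A + 2 * B * (nc xs)\<^sup>2) * (a3 / (2 * (B + 2))) * eps / a2)"
proof -
  have e: "(\<integral>\<^sup>+\<omega>. ennreal ((nc (X k \<omega> - xs))\<^sup>2) \<partial>M) = ennreal (\<integral>\<omega>. (nc (X k \<omega> - xs))\<^sup>2 \<partial>M)"
    by (rule nn_integral_eq_integral[OF all_int]) simp
  have h4: "cL * (\<integral>\<omega>. (nc (X k \<omega> - xs))\<^sup>2 \<partial>M) \<le> 2 * (\<integral>\<omega>. V (X k \<omega> - xs) \<partial>M)"
  proof -
    have "(\<integral>\<omega>. cL * (nc (X k \<omega> - xs))\<^sup>2 \<partial>M) \<le> (\<integral>\<omega>. 2 * V (X k \<omega> - xs) \<partial>M)"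
      by (rule integral_mono) (auto intro!: integrable_mult_right all_int V_int V_lower_bound)
    thus ?thesis by simp
  qed
  define q where "q = (1 - a2 * eps) ^ k"
  have q0: "q \<ge> 0" unfolding q_def using a2_facts by simp
  have "(\<integral>\<omega>. (nc (X k \<omega> - xs))\<^sup>2 \<partial>M) \<le> 2 / cL * (\<integral>\<omega>. V (X k \<omega> - xs) \<partial>M)"
    using h4 cL_pos by (simp add: field_simps)
  also have "\<dots> \<le> 2 / cL * (q * V (x0 - xs) + eps * C0 / a2)"
    using sol[of k] cL_pos unfolding q_def by (intro mult_left_mono) auto
  also have "\<dots> = 2 / cL * q * V (x0 - xs) + 2 / cL * (eps * C0 / a2)" by (simp add: algebra_simps)
  also have "2 / cL * q * V (x0 - xs) \<le> a1 * (nc (x0 - xs))\<^sup>2 * q"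
  proof -
    have "2 * V (x0 - xs) \<le> cU * (nc (x0 - xs))\<^sup>2" by (rule V_upper_bound)
    hence "q / cL * (2 * V (x0 - xs)) \<le> q / cL * (cU * (nc (x0 - xs))\<^sup>2)"
      using q0 cL_pos by (intro mult_left_mono) auto
    thus ?thesis unfolding a1_eq by (simp add: field_simps)
  qed
  also have "2 / cL * (eps * C0 / a2) = (A + 2 * B * (nc xs)\<^sup>2) * (a3 / (2 * (B + 2))) * eps / a2"
  proof -
    have nz: "B + 2 \<noteq> 0" "cL \<noteq> 0" "1 - gam * sqrt a1 \<noteq> 0" "mu \<noteq> 0" "les \<noteq> 0"
      using AB cL_pos a2_facts(1) mu les by auto
    show ?thesis unfolding a3_eq by (rule alg_fin) (use nz in auto)
  qed
  finally have "(\<integral>\<omega>. (nc (X k \<omega> - xs))\<^sup>2 \<partial>M) \<le> a1 * (nc (x0 - xs))\<^sup>2 * q + (A + 2 * B * (nc xs)\<^sup>2) * (a3 / (2 * (B + 2))) * eps / a2" by simp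
  thus ?thesis unfolding e q_def by (rule ennreal_leI)
qed

end
theorem corollary1:
  fixes M :: "'a measure"
    and nc ne ns :: "real ^ 'n \<Rightarrow> real"
    and H :: "real ^ 'n \<Rightarrow> real ^ 'n"
    and \<gamma> :: real and xstar :: "real ^ 'n"
    and x0 :: "real ^ 'n"
    and w :: "nat \<Rightarrow> 'a \<Rightarrow> real ^ 'n"
    and A B L \<mu> \<epsilon> lcs les ucs ues :: real
  defines "x \<equiv> SA_iter H (\<lambda>_. \<epsilon>) x0 w"
  defines "F \<equiv> SA_filt M x w"
  defines "\<alpha>1 \<equiv> (1 + \<mu> / lcs\<^sup>2) / (1 + \<mu> / ucs\<^sup>2)"
  defines "\<alpha>2 \<equiv> 1 - \<gamma> * sqrt \<alpha>1"
  defines "\<alpha>3 \<equiv> 4 * ucs\<^sup>2 * ues\<^sup>2 * (B + 2) * L * (lcs\<^sup>2 + \<mu>) / (\<mu> * lcs\<^sup>2 * les\<^sup>2)"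
  defines "\<alpha>4 \<equiv> \<alpha>3 / (2 * (B + 2))"
  assumes P: "prob_space M"
    and norms: "is_norm nc" "is_norm ne" "is_norm ns"
    and gamma: "0 < \<gamma>" "\<gamma> < 1"
    and contr: "\<forall>u v. nc (H u - H v) \<le> \<gamma> * nc (u - v)"
    and fixpt: "H xstar = xstar"
    and w_meas: "\<forall>k. w k \<in> borel_measurable M"
    and w_mean: "\<forall>k i. integrable M (\<lambda>\<omega>. w k \<omega> $ i) \<and>
                   (AE \<omega> in M. real_cond_exp M (F k) (\<lambda>\<omega>. w k \<omega> $ i) \<omega> = 0)"
    and w_var: "\<forall>k. AE \<omega> in M. nn_cond_exp M (F k) (\<lambda>\<omega>. ennreal ((ne (w k \<omega>))\<^sup>2)) \<omega>
                   \<le> ennreal (A + B * (ne (x k \<omega>))\<^sup>2)"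
    and AB: "A > 0" "B > 0"
    and smooth: "L_smooth (\<lambda>u. (ns u)\<^sup>2 / 2) ns L"
    and bnds: "0 < lcs" "lcs \<le> 1" "1 \<le> ucs" "0 < les" "les \<le> 1" "1 \<le> ues"
    and equiv_c: "\<forall>u. lcs * nc u \<le> ns u \<and> ns u \<le> ucs * nc u"
    and equiv_e: "\<forall>u. les * ne u \<le> ns u \<and> ns u \<le> ues * ne u"
    and mu: "\<mu> > 0" "\<alpha>2 > 0"
    and eps: "0 < \<epsilon>" "\<epsilon> \<le> \<alpha>2 / \<alpha>3"
  shows "\<forall>k. (\<integral>\<^sup>+ \<omega>. ennreal ((nc (x k \<omega> - xstar))\<^sup>2) \<partial>M)
           \<le> ennreal (\<alpha>1 * (nc (x0 - xstar))\<^sup>2 * (1 - \<alpha>2 * \<epsilon>) ^ k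
                     + (A + 2 * B * (nc xstar)\<^sup>2) * \<alpha>4 * \<epsilon> / \<alpha>2)"
proof -
  note d = assms(1-6)
  have loc: "SAloc nc ns L \<mu> lcs ucs M ne H \<gamma> xstar x0 w A B \<epsilon> les ues"
    using P norms gamma contr fixpt w_meas w_mean w_var AB smooth bnds equiv_c equiv_e mu eps
    unfolding d SAloc_def SAloc_axioms_def moreau_def by auto
  interpret S: SAloc nc ns L \<mu> lcs ucs M ne H \<gamma> xstar x0 w A B \<epsilon> les ues by (rule loc)
  show ?thesis unfolding d using S.main_bound by blast
qed

end
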